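(* Let $\rho$ be a Drinfeld $\mathbb{F}_q[t]$-module of rank $r$ defined over $\overline{k}$ with $\rho_t=\theta+\kappa_1\tau+\cdots+\kappa_{r-1}\tau^{r-1}+\tau^r$, and let $E=(E_{ij})\in\mathrm{Mat}_r(\overline{k}(t))$ satisfy $\Phi_\rho E=E^{(-1)}\Phi_\rho$ (i.e., $\mathbf{m}\mapsto E\mathbf{m}$ is an endomorphism of $M_\rho$). Then: (a) each $E_{ij}$ is regular at $t=\theta,\theta^q,\theta^{q^2},\ldots$; (b) $E_{21}(\theta)=\cdots=E_{r1}(\theta)=0$; (c) $E_{11}(\theta)\in K_\rho$.
   Context: $\mathbb{F}_q$ is the field with $q$ elements, $\theta,t$ independent variables, $A=\mathbb{F}_q[\theta]$, $k=\mathbb{F}_q(\theta)$, $\mathbb{C}_\infty$ the completion of an algebraic closure of $\mathbb{F}_q((1/\theta))$, $\overline{k}$ the algebraic closure of $k$ in $\mathbb{C}_\infty$. For $f=\sum a_it^i\in\mathbb{C}_\infty((t))$, $f^{(n)}=\sum a_i^{q^n}t^i$ (entrywise on matrices; $c^{(n)}=c^{q^n}$ on constants). $\tau$ is the $q$-power Frobenius, $\mathbb{C}_\infty[\tau]$ the twisted polynomial ring acting by $(\sum c_i\tau^i)(x)=\sum c_ix^{q^i}$; $\rho$ is the $\mathbb{F}_q$-algebra map $\mathbb{F}_q[t]\to\overline{k}[\tau]$ determined by $\rho_t$ ($\kappa_i\in\overline{k}$). $\exp_\rho$ is the unique entire $\mathbb{F}_q$-linear series $z+\sum_{i\ge1}\alpha_iz^{q^i}$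 with $\exp_\rho(\theta z)=\rho_t(\exp_\rho(z))$; $\Lambda_\rho=\ker\exp_\rho$ is a free $A$-module of rank $r$; $\mathrm{End}(\rho)=\{c\in\mathbb{C}_\infty:c\Lambda_\rho\subseteq\Lambda_\rho\}$ and $K_\rho$ is its fraction field. $\Phi_\rho\in\mathrm{Mat}_r(\overline{k}[t])$ has entries $1$ at $(i,i+1)$ for $1\le i\le r-1$, last row $(t-\theta,-\kappa_1^{(-1)},\dots,-\kappa_{r-1}^{(-(r-1))})$, zeros elsewhere. $M_\rho$ is $\overline{k}(t)^r$ with basis $\mathbf{m}=(m_1,\dots,m_r)^{\mathrm{tr}}$ as a left module over the twisted ring $\overline{k}(t)[\sigma,\sigma^{-1}]$ ($\sigma f=f^{(-1)}\sigma$) with $\sigma\mathbf{m}=\Phi_\rho\mathbf{m}$. *)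

theory Defs
  imports "HOL-Computational_Algebra.Polynomial" "HOL-Computational_Algebra.Fraction_Field"
          "Jordan_Normal_Form.Matrix"
begin

definition nonarch_abs :: "('a::field \<Rightarrow> real) \<Rightarrow> bool" where
  "nonarch_abs av \<longleftrightarrow> av 0 = 0 \<and> (\<forall>x. x \<noteq> 0 \<longrightarrow> av x > 0)
     \<and> (\<forall>x y. av (x * y) = av x * av y) \<and> (\<forall>x y. av (x + y) \<le> max (av x) (av y))"

definition conv_to :: "('a::field \<Rightarrow> real) \<Rightarrow> (nat \<Rightarrow> 'a) \<Rightarrow> 'a \<Rightarrow> bool" where
  "conv_to av s L \<longleftrightarrow> (\<forall>e>0. \<exists>N. \<forall>n\<ge>N. av (s n - L) < e)"

definition av_cauchy :: "('a::field \<Rightarrow> real) \<Rightarrow> (nat \<Rightarrow> 'a) \<Rightarrow> bool" where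
  "av_cauchy av s \<longleftrightarrow> (\<forall>e>0. \<exists>N. \<forall>m\<ge>N. \<forall>n\<ge>N. av (s m - s n) < e)"

definition av_complete :: "('a::field \<Rightarrow> real) \<Rightarrow> bool" where
  "av_complete av \<longleftrightarrow> (\<forall>s. av_cauchy av s \<longrightarrow> (\<exists>L. conv_to av s L))"

definition alg_closed :: "'a::field itself \<Rightarrow> bool" where
  "alg_closed _ \<longleftrightarrow> (\<forall>p::'a poly. degree p > 0 \<longrightarrow> (\<exists>x. poly p x = 0))"

definition Fq :: "nat \<Rightarrow> 'a::field set" where
  "Fq q = {x. x ^ q = x}"

text \<open>k = F_q(theta) inside the ambient field.\<close>
definition kset :: "nat \<Rightarrow> 'a::field \<Rightarrow> 'a set" where
  "kset q \<theta> = {poly a \<theta> / poly b \<theta> | a b. set (coeffs a) \<subseteq> Fq q \<and> set (coeffs b) \<subseteq> Fq q \<and> b \<noteq> 0}"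

definition kbar :: "nat \<Rightarrow> 'a::field \<Rightarrow> 'a set" where
  "kbar q \<theta> = {x. \<exists>p. p \<noteq> 0 \<and> set (coeffs p) \<subseteq> kset q \<theta> \<and> poly p x = 0}"

text \<open>The ambient field C with absolute value av is (a copy of) C_infinity:
  a complete, algebraically closed field of characteristic p (q = p^e), with a
  non-archimedean absolute value with |theta| > 1, in which kbar is dense.\<close>
definition is_C_infty :: "('a::field \<Rightarrow> real) \<Rightarrow> nat \<Rightarrow> 'a \<Rightarrow> bool" where
  "is_C_infty av q \<theta> \<longleftrightarrow>
     (\<exists>p e. prime p \<and> e \<ge> 1 \<and> q = p ^ e \<and> of_nat p = (0::'a))
     \<and> nonarch_abs av \<and> av_complete av \<and> alg_closed TYPE('a) \<and> av \<theta> > 1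
     \<and> (\<forall>x. \<forall>e>0. \<exists>y\<in>kbar q \<theta>. av (x - y) < e)"

text \<open>Inverse q-Frobenius c \<mapsto> c^(1/q) (bijective on C_infinity).\<close>
definition frob_inv :: "nat \<Rightarrow> 'a::field \<Rightarrow> 'a" where
  "frob_inv q x = (THE y. y ^ q = x)"

text \<open>Coefficient of tau^i in rho_t for 1 \<le> i \<le> r (kappa_r = 1).\<close>
definition rho_coeff :: "nat \<Rightarrow> (nat \<Rightarrow> 'a::field) \<Rightarrow> nat \<Rightarrow> 'a" where
  "rho_coeff r \<kappa> i = (if i = r then 1 else \<kappa> i)"

text \<open>Coefficients alpha_n of exp_rho, determined by exp(theta z) = rho_t(exp z):
  alpha_n (theta^(q^n) - theta) = sum_{i=1}^{min n r} kappa_i alpha_{n-i}^(q^i).\<close>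
function exp_coeff :: "nat \<Rightarrow> 'a::field \<Rightarrow> nat \<Rightarrow> (nat \<Rightarrow> 'a) \<Rightarrow> nat \<Rightarrow> 'a" where
  "exp_coeff q \<theta> r \<kappa> 0 = 1"
| "exp_coeff q \<theta> r \<kappa> (Suc n) =
     (\<Sum>i\<in>{1..min (Suc n) r}. rho_coeff r \<kappa> i * (exp_coeff q \<theta> r \<kappa> (Suc n - i)) ^ (q ^ i))
       / (\<theta> ^ (q ^ Suc n) - \<theta>)"
  by pat_completeness auto
termination
  by (relation "measure (\<lambda>(q, \<theta>, r, \<kappa>, n). n)") auto

definition exp_rho :: "('a::field \<Rightarrow> real) \<Rightarrow> nat \<Rightarrow> 'a \<Rightarrow> nat \<Rightarrow> (nat \<Rightarrow> 'a) \<Rightarrow> 'a \<Rightarrow> 'a" where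
  "exp_rho av q \<theta> r \<kappa> z =
     (THE L. conv_to av (\<lambda>N. \<Sum>i<N. exp_coeff q \<theta> r \<kappa> i * z ^ (q ^ i)) L)"

definition Lambda_rho :: "('a::field \<Rightarrow> real) \<Rightarrow> nat \<Rightarrow> 'a \<Rightarrow> nat \<Rightarrow> (nat \<Rightarrow> 'a) \<Rightarrow> 'a set" where
  "Lambda_rho av q \<theta> r \<kappa> = {z. exp_rho av q \<theta> r \<kappa> z = 0}"

definition End_rho :: "('a::field \<Rightarrow> real) \<Rightarrow> nat \<Rightarrow> 'a \<Rightarrow> nat \<Rightarrow> (nat \<Rightarrow> 'a) \<Rightarrow> 'a set" where
  "End_rho av q \<theta> r \<kappa> = {c. \<forall>l\<in>Lambda_rho av q \<theta> r \<kappa>. c * l \<in> Lambda_rho av q \<theta> r \<kappa>}"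

definition K_rho :: "('a::field \<Rightarrow> real) \<Rightarrow> nat \<Rightarrow> 'a \<Rightarrow> nat \<Rightarrow> (nat \<Rightarrow> 'a) \<Rightarrow> 'a set" where
  "K_rho av q \<theta> r \<kappa> = {a / b | a b. a \<in> End_rho av q \<theta> r \<kappa> \<and> b \<in> End_rho av q \<theta> r \<kappa> \<and> b \<noteq> 0}"

text \<open>kbar(t), as a subset of C_infinity(t) = 'a poly fract.\<close>
definition kbar_t :: "nat \<Rightarrow> 'a::field \<Rightarrow> 'a poly fract set" where
  "kbar_t q \<theta> = {Fract n d | n d. d \<noteq> 0 \<and> set (coeffs n) \<subseteq> kbar q \<theta> \<and> set (coeffs d) \<subseteq> kbar q \<theta>}"

definition regular_at :: "'a::field poly fract \<Rightarrow> 'a \<Rightarrow> bool" where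
  "regular_at x a \<longleftrightarrow> (\<exists>n d. poly d a \<noteq> 0 \<and> x = Fract n d)"

definition eval_at :: "'a::field poly fract \<Rightarrow> 'a \<Rightarrow> 'a" where
  "eval_at x a = (THE v. \<exists>n d. poly d a \<noteq> 0 \<and> x = Fract n d \<and> v = poly n a / poly d a)"

definition twist_inv :: "nat \<Rightarrow> 'a::field poly fract \<Rightarrow> 'a poly fract" where
  "twist_inv q x = (THE y. \<exists>n d. d \<noteq> 0 \<and> x = Fract n d
                        \<and> y = Fract (map_poly (frob_inv q) n) (map_poly (frob_inv q) d))"

text \<open>The matrix Phi_rho (0-based indices).\<close>
definition Phi_rho :: "nat \<Rightarrow> 'a::field \<Rightarrow> nat \<Rightarrow> (nat \<Rightarrow> 'a) \<Rightarrow> 'a poly fract mat" where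
  "Phi_rho q \<theta> r \<kappa> = mat r r (\<lambda>(i, j).
     if i + 1 < r then (if j = i + 1 then 1 else 0)
     else if j = 0 then Fract [:- \<theta>, 1:] 1
     else Fract [: - ((frob_inv q ^^ j) (\<kappa> j)) :] 1)"

end

theory Submission
  imports Defs "HOL-Computational_Algebra.Computational_Algebra" "HOL-Library.Function_Algebras"
begin

locale cinf =
  fixes av :: "'a::field \<Rightarrow> real" and q :: nat and \<theta> :: 'a
  assumes C: "is_C_infty av q \<theta>"
begin

lemma char_facts: obtains p e where "prime p" "e \<ge> 1" "q = p ^ e" "CHAR('a) = p"
proof -
  from C obtain p e where pe: "prime p" "e \<ge> 1" "q = p ^ e" "of_nat p = (0::'a)"
    unfolding is_C_infty_def by blast
  have "CHAR('a) dvd p" using pe(4) of_nat_eq_0_iff_char_dvd by blast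
  moreover have "CHAR('a) \<noteq> 1"
    by (metis of_nat_1 of_nat_CHAR one_neq_zero)
  ultimately have "CHAR('a) = p" using pe(1) prime_nat_iff by auto
  thus thesis using that pe by blast
qed

lemma q_gt1: "q > 1"
proof -
  obtain p e where "prime p" "e \<ge> 1" "q = p ^ e" by (rule char_facts)
  thus ?thesis using prime_gt_1_nat[of p] by (metis one_less_power not_one_le_zero le_neq_implies_less neq0_conv le_zero_eq)
qed

lemma q_pos: "q > 0" using q_gt1 by simp

lemma frob_add: "(x + y) ^ (q ^ n) = x ^ (q ^ n) + (y::'a) ^ (q ^ n)"
proof -
  obtain p e where pe: "prime p" "e \<ge> 1" "q = p ^ e" "CHAR('a) = p" by (rule char_facts)
  have "q ^ n = CHAR('a) ^ (e * n)" using pe by (simp add: power_mult)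
  thus ?thesis by (intro freshmans_dream') (use pe in auto)
qed

lemma frob_add1: "(x + y) ^ q = x ^ q + (y::'a) ^ q"
  using frob_add[of x y 1] by simp

lemma frob_sum: "(sum f A) ^ (q ^ n) = (\<Sum>i\<in>A. (f i :: 'a) ^ (q ^ n))"
proof -
  obtain p e where pe: "prime p" "e \<ge> 1" "q = p ^ e" "CHAR('a) = p" by (rule char_facts)
  have "q ^ n = CHAR('a) ^ (e * n)" using pe by (simp add: power_mult)
  thus ?thesis by (intro freshmans_dream_sum') (use pe in auto)
qed

lemma frob_sum1: "(sum f A) ^ q = (\<Sum>i\<in>A. (f i :: 'a) ^ q)"
  using frob_sum[of f A 1] by simp

lemma frob_minus: "(- x) ^ (q ^ n) = - ((x::'a) ^ (q ^ n))"
proof -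
  have "0 = (x + - x) ^ (q ^ n)" using q_pos by simp
  also have "\<dots> = x ^ (q ^ n) + (- x) ^ (q ^ n)" by (rule frob_add)
  finally show ?thesis by (simp add: eq_neg_iff_add_eq_0 add.commute)
qed

lemma frob_diff: "(x - y) ^ (q ^ n) = x ^ (q ^ n) - (y::'a) ^ (q ^ n)"
  using frob_add[of x "-y" n] frob_minus[of y n] by simp

lemma frob_minus1: "(- x) ^ q = - ((x::'a) ^ q)"
  using frob_minus[of x 1] by simp
lemma frob_diff1: "(x - y) ^ q = x ^ q - (y::'a) ^ q"
  using frob_diff[of x y 1] by simp

lemma frob_inj: "x ^ q = y ^ q \<Longrightarrow> x = (y::'a)"
  using frob_diff1[of x y] q_pos by (metis eq_iff_diff_eq_0 power_eq_0_iff)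

lemma frob_surj: "\<exists>y::'a. y ^ q = x"
proof -
  have ac: "alg_closed TYPE('a)" using C unfolding is_C_infty_def by blast
  define P where "P = monom (1::'a) q - [:x:]"
  have "P = monom 1 q + [:-x:]" unfolding P_def by simp
  moreover have "degree (monom (1::'a) q + [:-x:]) = q" using q_gt1
    by (subst degree_add_eq_left) (auto simp: degree_monom_eq)
  ultimately have "degree P = q" by simp
  hence "0 < degree P" using q_gt1 by simp
  then obtain y where "poly P y = 0" using ac unfolding alg_closed_def by blast
  hence "y ^ q = x" unfolding P_def by (simp add: poly_monom)
  thus ?thesis by blast
qed

lemma frob_inv_pow [simp]: "frob_inv q x ^ q = (x::'a)"
proof -
  obtain y where "y ^ q = x" using frob_surj by blast
  hence "\<exists>!y. y ^ q = x" using frob_inj by blast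
  thus ?thesis unfolding frob_inv_def by (rule theI')
qed

lemma frob_inv_of_pow [simp]: "frob_inv q (y ^ q) = (y::'a)"
  using frob_inv_pow[of "y^q"] frob_inj by blast

lemma frob_inv_eq_iff: "frob_inv q x = y \<longleftrightarrow> x = (y::'a) ^ q"
  by (metis frob_inv_of_pow frob_inv_pow)

lemma frob_inv_add: "frob_inv q (x + y) = frob_inv q x + frob_inv q (y::'a)"
  by (simp add: frob_inv_eq_iff frob_add1)
lemma frob_inv_mult: "frob_inv q (x * y) = frob_inv q x * frob_inv q (y::'a)"
  by (simp add: frob_inv_eq_iff power_mult_distrib)
lemma frob_inv_minus: "frob_inv q (- x) = - frob_inv q (x::'a)"
  by (simp add: frob_inv_eq_iff frob_minus1)
lemma frob_inv_diff: "frob_inv q (x - y) = frob_inv q x - frob_inv q (y::'a)"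
  by (simp add: frob_inv_eq_iff frob_diff1)
lemma frob_inv_0 [simp]: "frob_inv q (0::'a) = 0"
  using frob_inv_of_pow[of 0] q_pos by (simp add: zero_power)
lemma frob_inv_1 [simp]: "frob_inv q (1::'a) = 1"
  using frob_inv_of_pow[of 1] by simp
lemma frob_inv_inj: "frob_inv q x = frob_inv q y \<Longrightarrow> x = (y::'a)"
  by (metis frob_inv_pow)
lemma frob_inv_fix: "x ^ q = x \<Longrightarrow> frob_inv q x = (x::'a)"
  by (simp add: frob_inv_eq_iff)

lemma frob_inv_iter_pow: "((frob_inv q ^^ j) x) ^ (q ^ j) = (x::'a)"
proof (induction j arbitrary: x)
  case (Suc j)
  have "((frob_inv q ^^ Suc j) x) ^ (q ^ Suc j) = (((frob_inv q ^^ j) (frob_inv q x)) ^ (q ^ j)) ^ q"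
    by (simp add: funpow_Suc_right power_mult[symmetric] mult.commute del: funpow.simps)
  also have "\<dots> = x" using Suc by simp
  finally show ?case .
qed simp

sublocale frob_inv_hom: field_hom "frob_inv q :: 'a \<Rightarrow> 'a"
  by standard (auto simp: frob_inv_add frob_inv_mult)

end


context cinf
begin

lemma na: "nonarch_abs av" using C unfolding is_C_infty_def by blast

lemma av_0 [simp]: "av 0 = 0" using na unfolding nonarch_abs_def by blast
lemma av_pos: "x \<noteq> 0 \<Longrightarrow> av x > 0" using na unfolding nonarch_abs_def by blast
lemma av_nonneg [simp]: "av x \<ge> 0" by (cases "x = 0") (auto dest: av_pos)
lemma av_mult: "av (x * y) = av x * av y" using na unfolding nonarch_abs_def by blast
lemma av_ultra: "av (x + y) \<le> max (av x) (av y)" using na unfolding nonarch_abs_def by blast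
lemma av_eq_0_iff [simp]: "av x = 0 \<longleftrightarrow> x = 0"
  using av_pos by fastforce

lemma av_1 [simp]: "av 1 = 1"
proof -
  have "av 1 = av 1 * av 1" using av_mult[of 1 1] by simp
  moreover have "av 1 > 0" using av_pos by simp
  ultimately show ?thesis by simp
qed

lemma av_minus1: "av (-1) = 1"
proof -
  have "av (-1) * av (-1) = 1" using av_mult[of "-1" "-1"] by simp
  hence "av (-1) ^ 2 = 1 ^ 2" by (simp add: power2_eq_square)
  thus ?thesis using av_nonneg by (metis power2_eq_iff_nonneg zero_le_one)
qed

lemma av_minus [simp]: "av (- x) = av x"
  using av_mult[of "-1" x] av_minus1 by simp

lemma av_diff_comm: "av (x - y) = av (y - x)"
  by (metis av_minus minus_diff_eq)

lemma av_pow: "av (x ^ n) = av x ^ n"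
  by (induction n) (auto simp: av_mult)

lemma av_div: "av (x / y) = av x / av y"
proof (cases "y = 0")
  case False
  have "av (x / y) * av y = av x" using av_mult[of "x/y" y] False by simp
  thus ?thesis using av_pos[OF False] by (metis nonzero_eq_divide_eq order_less_irrefl)
qed simp

lemma av_sum_le: "(\<And>i. i \<in> A \<Longrightarrow> av (f i) \<le> M) \<Longrightarrow> M \<ge> 0 \<Longrightarrow> av (sum f A) \<le> M"
proof (induction A rule: infinite_finite_induct)
  case (insert x F)
  have "av (sum f (insert x F)) = av (f x + sum f F)" using insert by simp
  also have "\<dots> \<le> max (av (f x)) (av (sum f F))" by (rule av_ultra)
  also have "\<dots> \<le> M" using insert by auto
  finally show ?case .
qed auto

lemma av_add_le: "av x \<le> M \<Longrightarrow> av y \<le> M \<Longrightarrow> av (x + y) \<le> M"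
  using av_ultra[of x y] by linarith

lemma av_add_strict: "av y < av x \<Longrightarrow> av (x + y) = av x"
proof -
  assume a: "av y < av x"
  have 1: "av (x + y) \<le> av x" using av_ultra[of x y] a by linarith
  have "av x = av ((x + y) + (- y))" by simp
  also have "\<dots> \<le> max (av (x + y)) (av y)" using av_ultra[of "x+y" "-y"] by simp
  finally have "av x \<le> max (av (x + y)) (av y)" .
  thus ?thesis using 1 a by linarith
qed

lemma av_theta: "av \<theta> > 1" using C unfolding is_C_infty_def by blast
lemma theta_nz: "\<theta> \<noteq> 0" using av_theta by auto

lemma av_theta_pow_diff: "n \<ge> 1 \<Longrightarrow> av (\<theta> ^ (q ^ n) - \<theta>) = av \<theta> ^ (q ^ n)"
proof -
  assume n: "n \<ge> 1"
  have "q ^ n > 1" using q_gt1 n by (metis one_less_power not_one_le_zero le_neq_implies_less neq0_conv le_zero_eq)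
  hence "av \<theta> ^ 1 < av \<theta> ^ (q ^ n)" using av_theta by (intro power_strict_increasing) auto
  hence "av (- \<theta>) < av (\<theta> ^ (q ^ n))" by (simp add: av_pow)
  from av_add_strict[OF this] show ?thesis by (simp add: av_pow)
qed

lemma theta_pow_ne: "n \<ge> 1 \<Longrightarrow> \<theta> ^ (q ^ n) \<noteq> \<theta>"
proof
  assume n: "n \<ge> 1" and e: "\<theta> ^ (q ^ n) = \<theta>"
  have "av (\<theta> ^ (q ^ n) - \<theta>) = 0" using e by simp
  hence "av \<theta> ^ (q ^ n) = 0" using av_theta_pow_diff[OF n] by simp
  moreover have "av \<theta> ^ (q ^ n) > 0" using av_theta by (simp del: av_eq_0_iff)
  ultimately show False by linarith
qed

lemma conv_to_unique: "conv_to av s L \<Longrightarrow> conv_to av s L' \<Longrightarrow> L = L'"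
proof (rule ccontr)
  assume a: "conv_to av s L" "conv_to av s L'" "L \<noteq> L'"
  define e where "e = av (L - L')"
  have e: "e > 0" using a(3) av_pos unfolding e_def by auto
  obtain N1 where N1: "\<forall>n\<ge>N1. av (s n - L) < e" using a(1) e unfolding conv_to_def by blast
  obtain N2 where N2: "\<forall>n\<ge>N2. av (s n - L') < e" using a(2) e unfolding conv_to_def by blast
  define n where "n = max N1 N2"
  have "L - L' = (s n - L') + (- (s n - L))" by simp
  hence "av (L - L') \<le> max (av (s n - L')) (av (s n - L))" by (metis av_ultra av_minus)
  also have "\<dots> < e" using N1 N2 unfolding n_def by auto
  finally show False unfolding e_def by simp
qed

lemma series_conv:
  assumes "\<forall>e>0. \<exists>N. \<forall>n\<ge>N. av (T n) < e"
  shows "\<exists>L. conv_to av (\<lambda>N. \<Sum>i<N. T i) L"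
proof -
  have "av_cauchy av (\<lambda>N. \<Sum>i<N. T i)"
    unfolding av_cauchy_def
  proof (intro allI impI)
    fix e :: real assume e: "e > 0"
    obtain N where N: "\<forall>n\<ge>N. av (T n) < e / 2" using assms e by (meson half_gt_zero)
    have key: "av ((\<Sum>i<m. T i) - (\<Sum>i<n. T i)) < e" if "N \<le> n" "n \<le> m" for m n
    proof -
      have "(\<Sum>i<m. T i) - (\<Sum>i<n. T i) = (\<Sum>i\<in>{n..<m}. T i)"
        using that by (metis sum_diff_nat_ivl lessThan_atLeast0 le0)
      also have "av \<dots> \<le> e / 2" using N that e by (intro av_sum_le) (auto intro: less_imp_le)
      finally show ?thesis using e by simp
    qed
    show "\<exists>N. \<forall>m\<ge>N. \<forall>n\<ge>N. av ((\<Sum>i<m. T i) - (\<Sum>i<n. T i)) < e"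
    proof (intro exI allI impI)
      fix m n assume "N \<le> m" "N \<le> n"
      thus "av ((\<Sum>i<m. T i) - (\<Sum>i<n. T i)) < e"
        using key[of n m] key[of m n] av_diff_comm by (cases "n \<le> m") auto
    qed
  qed
  thus ?thesis using C unfolding is_C_infty_def av_complete_def by blast
qed

end


lemma grow_pow:
  fixes c K :: real and q :: nat
  assumes "c > 1" "q > 1"
  shows "\<exists>n0. \<forall>n\<ge>n0. K \<le> c ^ (q ^ n)"
proof -
  obtain n0 where n0: "K < c ^ n0" using real_arch_pow[OF assms(1)] by blast
  have "K \<le> c ^ (q ^ n)" if "n \<ge> n0" for n
  proof -
    have "n < 2 ^ n" by (rule less_exp)
    also have "(2::nat) ^ n \<le> q ^ n" using assms(2) by (intro power_mono) auto
    finally have "n0 \<le> q ^ n" using that by simp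
    hence "c ^ n0 \<le> c ^ (q ^ n)" using assms(1) by (intro power_increasing) auto
    thus ?thesis using n0 by simp
  qed
  thus ?thesis by blast
qed

locale drin = cinf av q \<theta> for av :: "'a::field \<Rightarrow> real" and q \<theta> +
  fixes r :: nat and \<kappa> :: "nat \<Rightarrow> 'a"
  assumes r_pos: "r \<ge> 1"
begin

abbreviation ec where "ec n \<equiv> exp_coeff q \<theta> r \<kappa> n"

definition KK :: real where "KK = 1 + (\<Sum>i\<in>{1..r}. av (rho_coeff r \<kappa> i))"

lemma KK_ge1: "KK \<ge> 1" unfolding KK_def by (simp add: sum_nonneg)

lemma KK_bound: "i \<in> {1..r} \<Longrightarrow> av (rho_coeff r \<kappa> i) \<le> KK"
proof -
  assume i: "i \<in> {1..r}"
  have "av (rho_coeff r \<kappa> i) \<le> (\<Sum>i\<in>{1..r}. av (rho_coeff r \<kappa> i))"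
    using i by (intro member_le_sum) auto
  thus ?thesis unfolding KK_def by simp
qed

lemma rec_bound:
  assumes B: "\<forall>i\<in>{1..min (Suc n) r}. av (ec (Suc n - i)) ^ (q ^ i) \<le> B" "B \<ge> 0"
  shows "av (ec (Suc n)) \<le> KK * B / av \<theta> ^ (q ^ Suc n)"
proof -
  define S where "S = (\<Sum>i\<in>{1..min (Suc n) r}. rho_coeff r \<kappa> i * (ec (Suc n - i)) ^ (q ^ i))"
  have e: "ec (Suc n) = S / (\<theta> ^ (q ^ Suc n) - \<theta>)" unfolding S_def by simp
  have "av S \<le> KK * B" unfolding S_def
  proof (rule av_sum_le)
    fix i assume i: "i \<in> {1..min (Suc n) r}"
    have "av (rho_coeff r \<kappa> i * ec (Suc n - i) ^ q ^ i) = av (rho_coeff r \<kappa> i) * av (ec (Suc n - i)) ^ (q ^ i)"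
      by (simp add: av_mult av_pow)
    also have "\<dots> \<le> KK * B" using i B KK_bound[of i] KK_ge1 by (intro mult_mono) auto
    finally show "av (rho_coeff r \<kappa> i * ec (Suc n - i) ^ q ^ i) \<le> KK * B" .
  qed (use B KK_ge1 in auto)
  moreover have "av (ec (Suc n)) = av S / av \<theta> ^ (q ^ Suc n)"
  proof -
    have "av (ec (Suc n)) = av S / av (\<theta> ^ (q ^ Suc n) - \<theta>)" by (subst e) (rule av_div)
    thus ?thesis using av_theta_pow_diff[of "Suc n"] by simp
  qed
  moreover have "av \<theta> ^ (q ^ Suc n) > 0" using av_theta by simp
  ultimately show ?thesis by (simp add: divide_right_mono)
qed

lemma step1: "\<exists>D\<ge>1. \<forall>n. av (ec n) \<le> D ^ (q ^ n)"
proof -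
  obtain n0 where n0: "\<forall>n\<ge>n0. KK \<le> av \<theta> ^ (q ^ n)" using grow_pow[OF av_theta q_gt1] by blast
  define D where "D = 1 + (\<Sum>n<n0. av (ec n))"
  have D1: "D \<ge> 1" unfolding D_def by (simp add: sum_nonneg)
  have "av (ec n) \<le> D ^ (q ^ n)" for n
  proof (induction n rule: less_induct)
    case (less n)
    show ?case
    proof (cases "n < n0")
      case True
      have "av (ec n) \<le> (\<Sum>n<n0. av (ec n))" using True by (intro member_le_sum) auto
      also have "\<dots> \<le> D" unfolding D_def by simp
      also have "D \<le> D ^ (q ^ n)" using D1 q_pos
        using power_increasing[of 1 "q^n" D] by simp
      finally show ?thesis .
    next
      case False
      show ?thesis
      proof (cases n)
        case 0 thus ?thesis using D1 by simp
      next
        case (Suc m)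
        have B: "\<forall>i\<in>{1..min (Suc m) r}. av (ec (Suc m - i)) ^ (q ^ i) \<le> D ^ (q ^ Suc m)"
        proof
          fix i assume i: "i \<in> {1..min (Suc m) r}"
          have "av (ec (Suc m - i)) ^ (q ^ i) \<le> (D ^ (q ^ (Suc m - i))) ^ (q ^ i)"
            using less[of "Suc m - i"] i Suc by (intro power_mono) auto
          also have "\<dots> = D ^ (q ^ Suc m)"
            using i by (simp add: power_mult[symmetric] power_add[symmetric])
          finally show "av (ec (Suc m - i)) ^ (q ^ i) \<le> D ^ (q ^ Suc m)" .
        qed
        have "av (ec n) \<le> KK * D ^ (q ^ Suc m) / av \<theta> ^ (q ^ Suc m)"
          using rec_bound[OF B] D1 Suc by simp
        also have "\<dots> \<le> D ^ (q ^ Suc m)"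
        proof -
          have "KK \<le> av \<theta> ^ (q ^ Suc m)" using n0[rule_format, of "Suc m"] False Suc by linarith
          moreover have "av \<theta> ^ (q ^ Suc m) > 0" using av_theta by simp
          ultimately show ?thesis using D1
            by (simp add: divide_le_eq mult.commute mult_left_mono)
        qed
        finally show ?thesis using Suc by simp
      qed
    qed
  qed
  thus ?thesis using D1 by blast
qed

definition ss :: real where "ss = sqrt (av \<theta>)"

lemma ss_gt1: "ss > 1" unfolding ss_def using av_theta by simp
lemma ss_sq: "ss * ss = av \<theta>" unfolding ss_def using av_theta by simp

lemma step2:
  assumes D: "D > 0" and N: "\<forall>n\<ge>N. av (ec n) \<le> D ^ (q ^ n)"
  shows "\<exists>N'. \<forall>n\<ge>N'. av (ec n) \<le> (D / ss) ^ (q ^ n)"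
proof -
  obtain n1 where n1: "\<forall>n\<ge>n1. KK \<le> ss ^ (q ^ n)" using grow_pow[OF ss_gt1 q_gt1] by blast
  have "av (ec n) \<le> (D / ss) ^ (q ^ n)" if n: "n \<ge> N + r + n1 + 1" for n
  proof -
    obtain m where m: "n = Suc m" using n by (cases n) auto
    have B: "\<forall>i\<in>{1..min (Suc m) r}. av (ec (Suc m - i)) ^ (q ^ i) \<le> D ^ (q ^ Suc m)"
    proof
      fix i assume i: "i \<in> {1..min (Suc m) r}"
      have "av (ec (Suc m - i)) ^ (q ^ i) \<le> (D ^ (q ^ (Suc m - i))) ^ (q ^ i)"
        using N i m n by (intro power_mono) auto
      also have "\<dots> = D ^ (q ^ Suc m)"
        using i by (simp add: power_mult[symmetric] power_add[symmetric])
      finally show "av (ec (Suc m - i)) ^ (q ^ i) \<le> D ^ (q ^ Suc m)" .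
    qed
    have "av (ec n) \<le> KK * D ^ (q ^ n) / av \<theta> ^ (q ^ n)"
      using rec_bound[OF B] D m by simp
    also have "av \<theta> ^ (q ^ n) = ss ^ (q ^ n) * ss ^ (q ^ n)"
      by (simp add: ss_sq[symmetric] power_mult_distrib)
    also have "KK * D ^ (q ^ n) / (ss ^ (q ^ n) * ss ^ (q ^ n)) \<le> (D / ss) ^ (q ^ n)"
    proof -
      have KK: "KK \<le> ss ^ (q ^ n)" using n1 n by simp
      have p: "ss ^ (q ^ n) > 0" using ss_gt1 by simp
      have "KK * D ^ (q ^ n) / (ss ^ (q ^ n) * ss ^ (q ^ n))
          \<le> ss ^ (q ^ n) * D ^ (q ^ n) / (ss ^ (q ^ n) * ss ^ (q ^ n))"
        using KK p D by (intro divide_right_mono mult_right_mono) auto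
      also have "\<dots> = (D / ss) ^ (q ^ n)" using p by (simp add: power_divide)
      finally show ?thesis .
    qed
    finally show ?thesis .
  qed
  thus ?thesis by blast
qed

lemma step3: "\<exists>D>0. \<forall>k. \<exists>N. \<forall>n\<ge>N. av (ec n) \<le> (D / ss ^ k) ^ (q ^ n)"
proof -
  obtain D where D: "D \<ge> 1" "\<forall>n. av (ec n) \<le> D ^ (q ^ n)" using step1 by blast
  have "\<exists>N. \<forall>n\<ge>N. av (ec n) \<le> (D / ss ^ k) ^ (q ^ n)" for k
  proof (induction k)
    case 0 thus ?case using D by auto
  next
    case (Suc k)
    then obtain N where "\<forall>n\<ge>N. av (ec n) \<le> (D / ss ^ k) ^ (q ^ n)" by blast
    from step2[OF _ this] D ss_gt1 show ?case by (simp add: field_simps)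
  qed
  thus ?thesis using D by (intro exI[of _ D]) auto
qed

lemma terms_to_0: "\<forall>e>0. \<exists>N. \<forall>n\<ge>N. av (ec n * z ^ (q ^ n)) < e"
proof (intro allI impI)
  fix e :: real assume e: "e > 0"
  obtain D where D: "D > 0" "\<forall>k. \<exists>N. \<forall>n\<ge>N. av (ec n) \<le> (D / ss ^ k) ^ (q ^ n)"
    using step3 by blast
  obtain k where k: "2 * D * (av z + 1) < ss ^ k" using real_arch_pow[OF ss_gt1] by blast
  obtain N where N: "\<forall>n\<ge>N. av (ec n) \<le> (D / ss ^ k) ^ (q ^ n)" using D by blast
  obtain N2 where N2: "(1/2::real) ^ N2 < e" using real_arch_pow_inv[OF e] by force
  have "av (ec n * z ^ (q ^ n)) < e" if n: "n \<ge> max N N2" for n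
  proof -
    have sk: "ss ^ k > 0" using ss_gt1 by simp
    have "av (ec n * z ^ (q ^ n)) = av (ec n) * av z ^ (q ^ n)" by (simp add: av_mult av_pow)
    also have "\<dots> \<le> (D / ss ^ k) ^ (q ^ n) * av z ^ (q ^ n)"
      using N n by (intro mult_right_mono) auto
    also have "\<dots> = (D * av z / ss ^ k) ^ (q ^ n)" by (simp add: power_mult_distrib power_divide)
    also have "\<dots> \<le> (1/2) ^ (q ^ n)"
    proof (rule power_mono)
      have "D * av z \<le> D * (av z + 1)" using D by simp
      also have "\<dots> \<le> ss ^ k / 2" using k by simp
      finally show "D * av z / ss ^ k \<le> 1 / 2" using sk by (simp add: divide_le_eq)
      show "0 \<le> D * av z / ss ^ k" using D sk by simp
    qed
    also have "\<dots> \<le> (1/2) ^ N2"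
    proof (rule power_decreasing)
      have "n < 2 ^ n" by (rule less_exp)
      also have "(2::nat) ^ n \<le> q ^ n" using q_gt1 by (intro power_mono) auto
      finally show "N2 \<le> q ^ n" using n by simp
    qed auto
    also have "\<dots> < e" by (rule N2)
    finally show ?thesis .
  qed
  thus "\<exists>N. \<forall>n\<ge>N. av (ec n * z ^ (q ^ n)) < e" by blast
qed

lemma exp_conv: "conv_to av (\<lambda>N. \<Sum>i<N. ec i * z ^ (q ^ i)) (exp_rho av q \<theta> r \<kappa> z)"
proof -
  obtain L where L: "conv_to av (\<lambda>N. \<Sum>i<N. ec i * z ^ (q ^ i)) L"
    using series_conv[OF terms_to_0[of z]] by blast
  have "exp_rho av q \<theta> r \<kappa> z = L"
    unfolding exp_rho_def using L conv_to_unique by blast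
  thus ?thesis using L by simp
qed

end


lemma sum_fun_apply: "(sum F A) n = (\<Sum>j\<in>A. F j n)"
  by (induction A rule: infinite_finite_induct) auto

context cinf
begin

definition tmul :: "(nat \<Rightarrow> 'a) \<Rightarrow> (nat \<Rightarrow> 'a) \<Rightarrow> (nat \<Rightarrow> 'a)" where
  "tmul f g = (\<lambda>n. \<Sum>i\<le>n. f i * g (n - i) ^ (q ^ i))"

definition tc :: "'a \<Rightarrow> nat \<Rightarrow> 'a" where "tc c = (\<lambda>n. if n = 0 then c else 0)"
definition tt :: "nat \<Rightarrow> nat \<Rightarrow> 'a" where "tt j = (\<lambda>n. if n = j then 1 else 0)"

lemma tmul_apply: "tmul f g n = (\<Sum>i\<le>n. f i * g (n - i) ^ (q ^ i))"
  unfolding tmul_def by simp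

lemma zero_pow_q [simp]: "(0::'a) ^ (q ^ i) = 0" using q_pos by simp

lemma tmul_add_left: "tmul (f + g) h = tmul f h + tmul g h"
  by (rule ext) (simp add: tmul_apply algebra_simps sum.distrib)

lemma tmul_add_right: "tmul f (g + h) = tmul f g + tmul f h"
  by (rule ext) (simp add: tmul_apply algebra_simps sum.distrib frob_add)

lemma tmul_zero_left [simp]: "tmul 0 g = 0"
  by (rule ext) (simp add: tmul_apply)
lemma tmul_zero_right [simp]: "tmul f 0 = 0"
  by (rule ext) (simp add: tmul_apply)

lemma tmul_minus_left: "tmul (- f) g = - tmul f g"
  by (rule ext) (simp add: tmul_apply sum_negf)
lemma tmul_minus_right: "tmul f (- g) = - tmul f g"
  by (rule ext) (simp add: tmul_apply sum_negf frob_minus)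
lemma tmul_diff_left: "tmul (f - g) h = tmul f h - tmul g h"
  using tmul_add_left[of f "-g" h] tmul_minus_left by simp
lemma tmul_diff_right: "tmul f (g - h) = tmul f g - tmul f h"
  using tmul_add_right[of f g "-h"] tmul_minus_right by simp

lemma tmul_sum_left: "tmul (sum F A) g = (\<Sum>j\<in>A. tmul (F j) g)"
proof (induction A rule: infinite_finite_induct)
  case (infinite A) thus ?case by (simp only: sum.infinite[OF infinite] tmul_zero_left)
next
  case empty thus ?case by (simp only: sum.empty tmul_zero_left)
next
  case (insert x A) thus ?case by (simp only: sum.insert[OF insert(1,2)] tmul_add_left)
qed
lemma tmul_sum_right: "tmul f (sum F A) = (\<Sum>j\<in>A. tmul f (F j))"
proof (induction A rule: infinite_finite_induct)
  case (infinite A) thus ?case by (simp only: sum.infinite[OF infinite] tmul_zero_right)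
next
  case empty thus ?case by (simp only: sum.empty tmul_zero_right)
next
  case (insert x A) thus ?case by (simp only: sum.insert[OF insert(1,2)] tmul_add_right)
qed

lemma tmul_assoc: "tmul (tmul f g) h = tmul f (tmul g h)"
proof (rule ext)
  fix n
  define F where "F a b c = f a * g b ^ (q ^ a) * h c ^ (q ^ (a + b))" for a b c
  define G where "G a b = F a b (n - a - b)" for a b
  have "tmul (tmul f g) h n = (\<Sum>i\<le>n. \<Sum>a\<le>i. F a (i - a) (n - i))"
    unfolding tmul_apply F_def
    by (intro sum.cong refl) (auto simp: sum_distrib_right frob_sum power_mult_distrib
        power_mult[symmetric] power_add[symmetric] mult.assoc)
  also have "\<dots> = (\<Sum>i\<le>n. \<Sum>a\<le>i. G a (i - a))"
    unfolding G_def by (intro sum.cong refl) auto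
  also have "\<dots> = (\<Sum>(a, b)\<in>{(a, b). a + b \<le> n}. G a b)"
    by (rule sum.triangle_reindex_eq[symmetric])
  also have "{(a, b). a + b \<le> n} = Sigma {..n} (\<lambda>a. {..n - a})" by auto
  also have "(\<Sum>(a, b)\<in>Sigma {..n} (\<lambda>a. {..n - a}). G a b) = (\<Sum>a\<le>n. \<Sum>b\<le>n - a. G a b)"
    by (rule sum.Sigma[symmetric]) auto
  also have "\<dots> = tmul f (tmul g h) n"
    unfolding tmul_apply G_def F_def
    by (intro sum.cong refl) (auto simp: sum_distrib_left frob_sum power_mult_distrib
        power_mult[symmetric] power_add[symmetric] mult.assoc add.commute)
  finally show "tmul (tmul f g) h n = tmul f (tmul g h) n" .
qed

lemma tmul_tc_left: "tmul (tc c) g = (\<lambda>n. c * g n)"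
proof (rule ext)
  fix n
  have "tmul (tc c) g n = (\<Sum>i\<in>{0}. tc c i * g (n - i) ^ (q ^ i))"
    unfolding tmul_apply by (intro sum.mono_neutral_right) (auto simp: tc_def)
  thus "tmul (tc c) g n = c * g n" by (simp add: tc_def)
qed

lemma tmul_tc_right: "tmul f (tc c) = (\<lambda>n. f n * c ^ (q ^ n))"
proof (rule ext)
  fix n
  have "tmul f (tc c) n = (\<Sum>i\<in>{n}. f i * tc c (n - i) ^ (q ^ i))"
    unfolding tmul_apply by (intro sum.mono_neutral_right) (auto simp: tc_def)
  thus "tmul f (tc c) n = f n * c ^ (q ^ n)" by (simp add: tc_def)
qed

lemma tmul_tt_left: "tmul (tt j) g = (\<lambda>n. if j \<le> n then g (n - j) ^ (q ^ j) else 0)"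
proof (rule ext)
  fix n
  show "tmul (tt j) g n = (if j \<le> n then g (n - j) ^ (q ^ j) else 0)"
  proof (cases "j \<le> n")
    case True
    have "tmul (tt j) g n = (\<Sum>i\<in>{j}. tt j i * g (n - i) ^ (q ^ i))"
      unfolding tmul_apply using True by (intro sum.mono_neutral_right) (auto simp: tt_def)
    thus ?thesis using True by (simp add: tt_def)
  next
    case False
    hence "\<forall>i\<le>n. i \<noteq> j" by auto
    thus ?thesis using False by (simp add: tmul_apply tt_def)
  qed
qed

lemma tmul_tt_right: "tmul f (tt j) = (\<lambda>n. if j \<le> n then f (n - j) else 0)"
proof (rule ext)
  fix n
  show "tmul f (tt j) n = (if j \<le> n then f (n - j) else 0)"
  proof (cases "j \<le> n")
    case True
    have "tmul f (tt j) n = (\<Sum>i\<in>{n - j}. f i * tt j (n - i) ^ (q ^ i))"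
      unfolding tmul_apply using True q_pos by (intro sum.mono_neutral_right) (auto simp: tt_def)
    thus ?thesis using True by (simp add: tt_def)
  next
    case False
    hence "\<forall>i\<le>n. n - i \<noteq> j" by auto
    thus ?thesis using False q_pos by (simp add: tmul_apply tt_def)
  qed
qed

lemma tt_0: "tt 0 = tc 1" by (rule ext) (simp add: tt_def tc_def)

lemma tmul_one_left [simp]: "tmul (tc 1) g = g"
  by (simp add: tmul_tc_left)
lemma tmul_one_right [simp]: "tmul f (tc 1) = f"
  by (simp add: tmul_tc_right)

lemma tmul_tc_tc: "tmul (tc a) (tc b) = tc (a * b)"
  unfolding tmul_tc_left by (rule ext) (simp add: tc_def)

lemma tmul_tt_tt: "tmul (tt i) (tt j) = tt (i + j)"
  unfolding tmul_tt_left using q_pos by (intro ext) (auto simp: tt_def)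

lemma tt_tc_comm: "tmul (tt j) (tc c) = tmul (tc (c ^ (q ^ j))) (tt j)"
  unfolding tmul_tt_left tmul_tc_left by (rule ext) (auto simp: tc_def tt_def)

lemma tc_add: "tc (a + b) = tc a + tc b" by (rule ext) (simp add: tc_def)
lemma tc_0 [simp]: "tc 0 = 0" by (rule ext) (simp add: tc_def)
lemma tc_minus: "tc (- a) = - tc a" by (rule ext) (simp add: tc_def)
lemma tc_sum: "tc (sum f A) = (\<Sum>i\<in>A. tc (f i))"
  by (induction A rule: infinite_finite_induct) (auto simp: tc_add)

lemma tc_comm: "tmul (tc a) (tc b) = tmul (tc b) (tc a)"
  by (simp add: tmul_tc_tc mult.commute)

end


lemma reg_poly: "regular_at (Fract p 1) x"
  unfolding regular_at_def by (intro exI[of _ p] exI[of _ 1]) simp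

lemma reg_add: "regular_at f x \<Longrightarrow> regular_at g x \<Longrightarrow> regular_at (f + g) (x::'a::field)"
  unfolding regular_at_def
proof (elim exE conjE)
  fix n d n' d' assume a: "poly d x \<noteq> 0" "f = Fract n d" "poly d' x \<noteq> 0" "g = Fract n' d'"
  hence "d \<noteq> 0" "d' \<noteq> 0" by auto
  hence "f + g = Fract (n * d' + n' * d) (d * d')" using a by simp
  thus "\<exists>n d. poly d x \<noteq> 0 \<and> f + g = Fract n d" using a by (intro exI[of _ "n * d' + n' * d"] exI[of _ "d * d'"]) auto
qed

lemma reg_mult: "regular_at f x \<Longrightarrow> regular_at g x \<Longrightarrow> regular_at (f * g) (x::'a::field)"
  unfolding regular_at_def
proof (elim exE conjE)
  fix n d n' d' assume a: "poly d x \<noteq> 0" "f = Fract n d" "poly d' x \<noteq> 0" "g = Fract n' d'"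
  hence "f * g = Fract (n * n') (d * d')" by simp
  thus "\<exists>n d. poly d x \<noteq> 0 \<and> f * g = Fract n d" using a by (intro exI[of _ "n * n'"] exI[of _ "d * d'"]) auto
qed

lemma reg_minus: "regular_at f x \<Longrightarrow> regular_at (- f) (x::'a::field)"
  unfolding regular_at_def by (metis minus_fract)

lemma reg_diff: "regular_at f x \<Longrightarrow> regular_at g x \<Longrightarrow> regular_at (f - g) (x::'a::field)"
  using reg_add[of f x "-g"] reg_minus[of g x] by simp

lemma reg_zero: "regular_at 0 (x::'a::field)"
  using reg_poly[of 0 x] by (simp add: fract_collapse)

lemma reg_sum: "(\<And>i. i \<in> A \<Longrightarrow> regular_at (F i) x) \<Longrightarrow> regular_at (sum F A) (x::'a::field)"
  by (induction A rule: infinite_finite_induct) (auto intro: reg_add reg_zero)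

lemma reg_div: "regular_at f x \<Longrightarrow> poly g x \<noteq> 0 \<Longrightarrow> regular_at (f * Fract 1 g) (x::'a::field)"
  unfolding regular_at_def
proof (elim exE conjE)
  fix n d assume a: "poly d x \<noteq> 0" "f = Fract n d" "poly g x \<noteq> 0"
  hence "f * Fract 1 g = Fract n (d * g)" by simp
  thus "\<exists>n d. poly d x \<noteq> 0 \<and> f * Fract 1 g = Fract n d" using a by (intro exI[of _ n] exI[of _ "d * g"]) auto
qed

lemma reg_finite: "finite {x::'a::field. \<not> regular_at f x}"
proof -
  obtain n d where f: "f = Fract n d" "d \<noteq> 0" by (cases f) auto
  have "{x. \<not> regular_at f x} \<subseteq> {x. poly d x = 0}"
    using f unfolding regular_at_def by auto
  moreover have "finite {x. poly d x = 0}" using f(2) by (rule poly_roots_finite)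
  ultimately show ?thesis by (rule finite_subset)
qed

lemma eval_at_Fract: "poly d x \<noteq> 0 \<Longrightarrow> eval_at (Fract n d) x = poly n x / poly d (x::'a::field)"
  unfolding eval_at_def
proof (rule the_equality)
  assume "poly d x \<noteq> 0"
  thus "\<exists>n' d'. poly d' x \<noteq> 0 \<and> Fract n d = Fract n' d' \<and> poly n x / poly d x = poly n' x / poly d' x"
    by blast
next
  fix v assume a: "poly d x \<noteq> 0" and "\<exists>n' d'. poly d' x \<noteq> 0 \<and> Fract n d = Fract n' d' \<and> v = poly n' x / poly d' x"
  then obtain n' d' where b: "poly d' x \<noteq> 0" "Fract n d = Fract n' d'" "v = poly n' x / poly d' x" by blast
  have "d \<noteq> 0" "d' \<noteq> 0" using a b by auto
  hence "n * d' = n' * d" using b eq_fract by auto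
  hence "poly n x * poly d' x = poly n' x * poly d x" by (metis poly_mult)
  thus "v = poly n x / poly d x" using a b by (simp add: frac_eq_eq)
qed

lemma eval_mult_poly:
  "regular_at f x \<Longrightarrow> eval_at (f * Fract p 1) x = eval_at f x * poly p (x::'a::field)"
proof -
  assume "regular_at f x"
  then obtain n d where a: "poly d x \<noteq> 0" "f = Fract n d" unfolding regular_at_def by blast
  have "f * Fract p 1 = Fract (n * p) d" using a by simp
  thus ?thesis using a by (simp add: eval_at_Fract)
qed

lemma fract_reduced:
  "\<exists>n d. d \<noteq> 0 \<and> f = Fract n d \<and> (\<forall>y. poly d y = 0 \<longrightarrow> \<not> regular_at f (y::'a::field))"
proof -
  define P where "P k \<longleftrightarrow> (\<exists>n d. d \<noteq> 0 \<and> degree d = k \<and> f = Fract n d)" for k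
  obtain n0 d0 where f0: "f = Fract n0 d0" "d0 \<noteq> 0" by (cases f) auto
  have "P (degree d0)" unfolding P_def using f0 by blast
  then obtain k where k: "P k" "\<And>k'. k' < k \<Longrightarrow> \<not> P k'"
    using exists_least_iff[of P] by blast
  then obtain n d where nd: "d \<noteq> 0" "degree d = k" "f = Fract n d" unfolding P_def by blast
  have "\<not> regular_at f y" if y: "poly d y = 0" for y
  proof
    assume "regular_at f y"
    then obtain n' d' where a: "poly d' y \<noteq> 0" "f = Fract n' d'" unfolding regular_at_def by blast
    have "d' \<noteq> 0" using a by auto
    hence e: "n * d' = n' * d" using a nd eq_fract by auto
    hence "poly n y * poly d' y = poly n' y * poly d y" by (metis poly_mult)
    hence "poly n y = 0" using y a by simp
    then obtain n1 where n1: "n = [:- y, 1:] * n1" by (metis dvdE poly_eq_0_iff_dvd)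
    obtain d1 where d1: "d = [:- y, 1:] * d1" using y by (metis dvdE poly_eq_0_iff_dvd)
    have d1nz: "d1 \<noteq> 0" using d1 nd by auto
    have "degree d = degree [:- y, 1:] + degree d1" unfolding d1 by (rule degree_mult_eq) (use d1nz in auto)
    hence "degree d = degree d1 + 1" by simp
    hence "degree d1 < k" using nd by simp
    moreover have "f = Fract n1 d1"
    proof -
      have "Fract n d = Fract ([:- y, 1:] * n1) ([:- y, 1:] * d1)" using n1 d1 by simp
      also have "\<dots> = Fract n1 d1" by (rule mult_fract_cancel) simp
      finally show ?thesis using nd by simp
    qed
    ultimately show False using k(2) d1nz unfolding P_def by blast
  qed
  thus ?thesis using nd by blast
qed

locale fhom =
  fixes h :: "'a::field \<Rightarrow> 'a"
  assumes h_add: "h (x + y) = h x + h y" and h_mult: "h (x * y) = h x * h y"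
    and h_inj: "h x = h y \<Longrightarrow> x = y" and h_one: "h 1 = 1"
begin

lemma h_0 [simp]: "h 0 = 0"
  by (metis add_cancel_right_right h_add)

lemma h_sum: "h (sum f A) = (\<Sum>i\<in>A. h (f i))"
  by (induction A rule: infinite_finite_induct) (auto simp: h_add)

lemma h_minus: "h (- x) = - h x"
  using h_add[of x "-x"] by (simp add: eq_neg_iff_add_eq_0 add.commute)

lemma coeff_mph: "coeff (map_poly h p) i = h (coeff p i)"
  by (simp add: coeff_map_poly)

lemma mph_add: "map_poly h (a + b) = map_poly h a + map_poly h b"
  by (rule poly_eqI) (simp add: coeff_mph h_add)

lemma mph_mult: "map_poly h (a * b) = map_poly h a * map_poly h b"
  by (rule poly_eqI) (simp add: coeff_mph coeff_mult h_sum h_mult)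

lemma mph_minus: "map_poly h (- a) = - map_poly h a"
  by (rule poly_eqI) (simp add: coeff_mph h_minus)

lemma mph_diff: "map_poly h (a - b) = map_poly h a - map_poly h b"
  using mph_add[of a "-b"] mph_minus[of b] by simp

lemma mph_eq_0_iff [simp]: "map_poly h a = 0 \<longleftrightarrow> a = 0"
proof
  assume "map_poly h a = 0"
  hence "\<forall>i. h (coeff a i) = h 0" by (metis coeff_0 coeff_mph h_0)
  hence "\<forall>i. coeff a i = 0" using h_inj by blast
  thus "a = 0" by (simp add: poly_eq_iff)
qed simp

lemma mph_const [simp]: "map_poly h [:c:] = [:h c:]"
  by (rule poly_eqI) (simp add: coeff_mph coeff_pCons split: nat.splits)

lemma mph_one [simp]: "map_poly h 1 = 1"
  using mph_const[of 1] by (simp add: h_one one_pCons)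

lemma mph_pow: "map_poly h (a ^ n) = map_poly h a ^ n"
  by (induction n) (simp_all add: mph_mult)

lemma mph_X [simp]: "map_poly h [:0, 1:] = [:0, 1:]"
  by (rule poly_eqI) (simp add: coeff_mph coeff_pCons h_one split: nat.splits)

lemma mph_monom [simp]: "map_poly h (monom 1 n) = monom 1 n"
  by (rule poly_eqI) (simp add: coeff_mph coeff_monom h_one)

lemma poly_mph: "poly (map_poly h p) (h x) = h (poly p x)"
  by (induction p) (simp_all add: map_poly_pCons h_add h_mult)

end

context cinf
begin

sublocale fi: fhom "frob_inv q :: 'a \<Rightarrow> 'a"
  by unfold_locales (auto simp: frob_inv_add frob_inv_mult dest: frob_inv_inj)

sublocale fq: fhom "\<lambda>x::'a. x ^ q"
  by unfold_locales (auto simp: frob_add1 power_mult_distrib dest: frob_inj)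

abbreviation "mp \<equiv> map_poly (frob_inv q :: 'a \<Rightarrow> 'a)"
abbreviation "mq \<equiv> map_poly (\<lambda>x::'a. x ^ q)"

lemma mq_mp [simp]: "mq (mp p) = p"
  by (rule poly_eqI) (simp add: fi.coeff_mph fq.coeff_mph)

lemma twist_Fract: "d \<noteq> 0 \<Longrightarrow> twist_inv q (Fract n d) = Fract (mp n) (mp d)"
  unfolding twist_inv_def
proof (rule the_equality)
  assume "d \<noteq> 0"
  thus "\<exists>n' d'. d' \<noteq> 0 \<and> Fract n d = Fract n' d' \<and> Fract (mp n) (mp d) = Fract (mp n') (mp d')"
    by blast
next
  fix y assume d: "d \<noteq> 0" and "\<exists>n' d'. d' \<noteq> 0 \<and> Fract n d = Fract n' d' \<and> y = Fract (mp n') (mp d')"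
  then obtain n' d' where a: "d' \<noteq> 0" "Fract n d = Fract n' d'" "y = Fract (mp n') (mp d')" by blast
  have "n * d' = n' * d" using a d eq_fract by auto
  hence "mp n * mp d' = mp n' * mp d" by (metis fi.mph_mult)
  thus "y = Fract (mp n) (mp d)" using a d by (simp add: eq_fract)
qed

lemma twist_poly: "twist_inv q (Fract p 1) = Fract (mp p) 1"
  using twist_Fract[of 1 p] by simp

lemma twist_mult: "twist_inv q (x * y) = twist_inv q x * twist_inv q (y :: 'a poly fract)"
proof -
  obtain a b where x: "x = Fract a b" "b \<noteq> 0" by (cases x) auto
  obtain c d where y: "y = Fract c d" "d \<noteq> 0" by (cases y) auto
  show ?thesis using x y by (simp add: twist_Fract fi.mph_mult)
qed

lemma twist_add: "twist_inv q (x + y) = twist_inv q x + twist_inv q (y :: 'a poly fract)"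
proof -
  obtain a b where x: "x = Fract a b" "b \<noteq> 0" by (cases x) auto
  obtain c d where y: "y = Fract c d" "d \<noteq> 0" by (cases y) auto
  show ?thesis using x y by (simp add: twist_Fract fi.mph_mult fi.mph_add)
qed

lemma twist_reg1: "regular_at f (x::'a) \<Longrightarrow> regular_at (twist_inv q f) (frob_inv q x)"
proof -
  assume "regular_at f x"
  then obtain n d where a: "poly d x \<noteq> 0" "f = Fract n d" unfolding regular_at_def by blast
  have "d \<noteq> 0" using a by auto
  hence "twist_inv q f = Fract (mp n) (mp d)" using a twist_Fract by simp
  moreover have "poly (mp d) (frob_inv q x) \<noteq> 0" using a fi.poly_mph[of d x]
    by (metis frob_inv_0 frob_inv_inj)
  ultimately show ?thesis unfolding regular_at_def by blast
qed

lemma twist_reg2: "regular_at (twist_inv q f) (frob_inv q (x::'a)) \<Longrightarrow> regular_at f x"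
proof -
  assume "regular_at (twist_inv q f) (frob_inv q x)"
  then obtain n' d' where a: "poly d' (frob_inv q x) \<noteq> 0" "twist_inv q f = Fract n' d'"
    unfolding regular_at_def by blast
  obtain n d where f: "f = Fract n d" "d \<noteq> 0" by (cases f) auto
  have d': "d' \<noteq> 0" using a by auto
  have "Fract (mp n) (mp d) = Fract n' d'" using a f twist_Fract by simp
  moreover have "mp d \<noteq> 0" using f by simp
  ultimately have "mp n * d' = n' * mp d" using d' eq_fract(1) by blast
  hence "mq (mp n * d') = mq (n' * mp d)" by simp
  hence "n * mq d' = mq n' * d" by (simp add: fq.mph_mult)
  hence "f = Fract (mq n') (mq d')" using f d' by (simp add: eq_fract)
  moreover have "poly (mq d') x \<noteq> 0"
    using fq.poly_mph[of d' "frob_inv q x"] a by simp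
  ultimately show ?thesis unfolding regular_at_def by blast
qed

end


lemma mult_entry:
  assumes "A \<in> carrier_mat r r" "B \<in> carrier_mat r r" "i < r" "j < r"
  shows "(A * B) $$ (i, j) = (\<Sum>k<r. A $$ (i, k) * B $$ (k, j))"
  using assms by (simp add: scalar_prod_def lessThan_atLeast0)

lemma inj_infinite_bad:
  assumes "inj (f :: nat \<Rightarrow> 'a)" "\<forall>m. f m \<in> S"
  shows "infinite S"
proof
  assume "finite S"
  hence "finite (range f)" using assms(2) by (meson finite_subset image_subset_iff)
  hence "finite (UNIV :: nat set)" using assms(1) finite_imageD by blast
  thus False by simp
qed

context drin
begin

definition TT :: "'a poly fract" where "TT = Fract [:- \<theta>, 1:] 1"
definition cc :: "nat \<Rightarrow> 'a poly fract" where "cc k = Fract [: - ((frob_inv q ^^ k) (\<kappa> k)) :] 1"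
definition pl :: "nat \<Rightarrow> 'a poly fract" where "pl j = (if j = 0 then TT else cc j)"

definition LHS :: "(nat \<Rightarrow> nat \<Rightarrow> 'a poly fract) \<Rightarrow> nat \<Rightarrow> nat \<Rightarrow> 'a poly fract" where
  "LHS e i j = (if i + 1 < r then e (i + 1) j else TT * e 0 j + (\<Sum>k\<in>{1..<r}. cc k * e k j))"
definition RHS :: "(nat \<Rightarrow> nat \<Rightarrow> 'a poly fract) \<Rightarrow> nat \<Rightarrow> nat \<Rightarrow> 'a poly fract" where
  "RHS e' i j = (if 1 \<le> j then e' i (j - 1) else 0) + e' i (r - 1) * pl j"
definition tw :: "(nat \<Rightarrow> nat \<Rightarrow> 'a poly fract) \<Rightarrow> nat \<Rightarrow> nat \<Rightarrow> 'a poly fract" where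
  "tw e i j = twist_inv q (e i j)"
definition EQ :: "(nat \<Rightarrow> nat \<Rightarrow> 'a poly fract) \<Rightarrow> bool" where
  "EQ e \<longleftrightarrow> (\<forall>i<r. \<forall>j<r. LHS e i j = RHS (tw e) i j)"

lemma Phi_entry:
  assumes "i < r" "k < r"
  shows "Phi_rho q \<theta> r \<kappa> $$ (i, k) = (if i + 1 < r then (if k = i + 1 then 1 else 0) else pl k)"
  using assms unfolding Phi_rho_def pl_def TT_def cc_def by simp

lemma Phi_carrier: "Phi_rho q \<theta> r \<kappa> \<in> carrier_mat r r"
  unfolding Phi_rho_def by simp

lemma matrix_EQ:
  assumes E: "E \<in> carrier_mat r r"
    and end_: "Phi_rho q \<theta> r \<kappa> * E = map_mat (twist_inv q) E * Phi_rho q \<theta> r \<kappa>"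
  shows "EQ (\<lambda>i j. E $$ (i, j))"
  unfolding EQ_def
proof (intro allI impI)
  fix i j assume i: "i < r" and j: "j < r"
  define \<Phi> where "\<Phi> = Phi_rho q \<theta> r \<kappa>"
  define E' where "E' = map_mat (twist_inv q) E"
  have \<Phi>: "\<Phi> \<in> carrier_mat r r" unfolding \<Phi>_def by (rule Phi_carrier)
  have E': "E' \<in> carrier_mat r r" using E unfolding E'_def by simp
  have "(\<Phi> * E) $$ (i, j) = (\<Sum>k<r. \<Phi> $$ (i, k) * E $$ (k, j))"
    by (rule mult_entry[OF \<Phi> E i j])
  also have "\<dots> = LHS (\<lambda>i j. E $$ (i, j)) i j"
  proof (cases "i + 1 < r")
    case True
    have "(\<Sum>k<r. \<Phi> $$ (i, k) * E $$ (k, j)) = (\<Sum>k<r. if k = i + 1 then E $$ (k, j) else 0)"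
      using True by (intro sum.cong) (auto simp: \<Phi>_def Phi_entry)
    also have "\<dots> = E $$ (i + 1, j)" using True by (simp add: sum.delta)
    finally show ?thesis using True unfolding LHS_def by simp
  next
    case False
    have "(\<Sum>k<r. \<Phi> $$ (i, k) * E $$ (k, j)) = (\<Sum>k<r. pl k * E $$ (k, j))"
      using False i by (intro sum.cong) (auto simp: \<Phi>_def Phi_entry)
    also have "(\<Sum>k<r. pl k * E $$ (k, j)) = TT * E $$ (0, j) + (\<Sum>k\<in>{1..<r}. cc k * E $$ (k, j))"
    proof -
      have s: "{..<r} = insert 0 {1..<r}" using r_pos by auto
      show ?thesis unfolding s by (subst sum.insert) (auto simp: pl_def intro!: sum.cong)
    qed
    finally show ?thesis using False unfolding LHS_def by simp
  qed
  finally have L: "(\<Phi> * E) $$ (i, j) = LHS (\<lambda>i j. E $$ (i, j)) i j" .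
  have "(E' * \<Phi>) $$ (i, j) = (\<Sum>k<r. E' $$ (i, k) * \<Phi> $$ (k, j))"
    by (rule mult_entry[OF E' \<Phi> i j])
  also have "\<dots> = (\<Sum>k<r. E' $$ (i, k) * (if k + 1 < r then (if j = k + 1 then 1 else 0) else pl j))"
    using j by (intro sum.cong) (auto simp: \<Phi>_def Phi_entry)
  also have "{..<r} = insert (r - 1) {..<r - 1}" using r_pos by auto
  also have "(\<Sum>k\<in>insert (r - 1) {..<r - 1}. E' $$ (i, k) * (if k + 1 < r then (if j = k + 1 then 1 else 0) else pl j))
      = E' $$ (i, r - 1) * pl j + (\<Sum>k<r - 1. if k = j - 1 \<and> 1 \<le> j then E' $$ (i, k) else 0)"
    using r_pos by (subst sum.insert) (auto intro!: sum.cong)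
  also have "(\<Sum>k<r - 1. if k = j - 1 \<and> 1 \<le> j then E' $$ (i, k) else 0) = (if 1 \<le> j then E' $$ (i, j - 1) else 0)"
    using j by (cases "1 \<le> j") (auto simp: sum.delta)
  finally have R: "(E' * \<Phi>) $$ (i, j) = RHS (tw (\<lambda>i j. E $$ (i, j))) i j"
    unfolding RHS_def tw_def E'_def using i j E r_pos by (auto simp: add.commute)
  show "LHS (\<lambda>i j. E $$ (i, j)) i j = RHS (tw (\<lambda>i j. E $$ (i, j))) i j"
    using L R end_ unfolding \<Phi>_def E'_def by simp
qed

definition regE :: "(nat \<Rightarrow> nat \<Rightarrow> 'a poly fract) \<Rightarrow> 'a \<Rightarrow> bool" where
  "regE e y \<longleftrightarrow> (\<forall>i<r. \<forall>j<r. regular_at (e i j) y)"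

lemma reg_TT_inv: "y \<noteq> \<theta> \<Longrightarrow> regular_at f y \<Longrightarrow> regular_at (f * Fract 1 [:- \<theta>, 1:]) y"
  by (rule reg_div) auto

lemma TT_inv: "TT * Fract 1 [:- \<theta>, 1:] = 1"
  unfolding TT_def by (simp add: One_fract_def eq_fract)

lemma reg_pl: "regular_at (pl j) y" unfolding pl_def TT_def cc_def by (simp add: reg_poly)
lemma reg_cc: "regular_at (cc j) y" unfolding cc_def by (simp add: reg_poly)
lemma reg_TT: "regular_at TT y" unfolding TT_def by (simp add: reg_poly)

lemma reg_RHS: "regE e' y \<Longrightarrow> i < r \<Longrightarrow> j < r \<Longrightarrow> regular_at (RHS e' i j) y"
  unfolding RHS_def regE_def using r_pos
  by (intro reg_add reg_mult reg_pl) (auto intro: reg_zero)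

lemma L1: assumes "EQ e" "y \<noteq> \<theta>" "regE (tw e) y" shows "regE e y"
proof -
  have hi: "regular_at (e i j) y" if "1 \<le> i" "i < r" "j < r" for i j
  proof -
    have "e i j = LHS e (i - 1) j" using that unfolding LHS_def by simp
    also have "\<dots> = RHS (tw e) (i - 1) j" using assms(1) that unfolding EQ_def by simp
    finally show ?thesis using reg_RHS[OF assms(3)] that by simp
  qed
  have lo: "regular_at (e 0 j) y" if "j < r" for j
  proof -
    have "TT * e 0 j = LHS e (r - 1) j - (\<Sum>k\<in>{1..<r}. cc k * e k j)"
      unfolding LHS_def using r_pos by simp
    also have "\<dots> = RHS (tw e) (r - 1) j - (\<Sum>k\<in>{1..<r}. cc k * e k j)"
      using assms(1) that r_pos unfolding EQ_def by simp
    finally have "TT * e 0 j = \<dots>" .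
    moreover have "regular_at (RHS (tw e) (r - 1) j - (\<Sum>k\<in>{1..<r}. cc k * e k j)) y"
      using reg_RHS[OF assms(3)] that r_pos hi
      by (intro reg_diff reg_sum reg_mult reg_cc) auto
    ultimately have "regular_at (TT * e 0 j * Fract 1 [:- \<theta>, 1:]) y"
      using assms(2) reg_TT_inv by simp
    moreover have "TT * e 0 j * Fract 1 [:- \<theta>, 1:] = e 0 j * (TT * Fract 1 [:- \<theta>, 1:])"
      by (simp add: ac_simps)
    ultimately show ?thesis using TT_inv by simp
  qed
  show ?thesis unfolding regE_def using hi lo by (metis le_less_linear less_one)
qed

lemma L2: assumes "EQ e" "y \<noteq> \<theta>" "regE e y" shows "regE (tw e) y"
proof -
  have regLHS: "regular_at (LHS e i j) y" if "i < r" "j < r" for i j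
    using assms(3) that r_pos unfolding LHS_def regE_def
    by (auto intro!: reg_add reg_mult reg_sum reg_TT reg_cc)
  have last: "regular_at (tw e i (r - 1)) y" if i: "i < r" for i
  proof -
    have "tw e i (r - 1) * TT = RHS (tw e) i 0" unfolding RHS_def pl_def by simp
    also have "\<dots> = LHS e i 0" using assms(1) i r_pos unfolding EQ_def by simp
    finally have "tw e i (r - 1) * TT * Fract 1 [:- \<theta>, 1:] = LHS e i 0 * Fract 1 [:- \<theta>, 1:]" by simp
    hence "tw e i (r - 1) = LHS e i 0 * Fract 1 [:- \<theta>, 1:]" using TT_inv by (simp add: mult.assoc)
    thus ?thesis using reg_TT_inv[OF assms(2) regLHS[OF i]] r_pos by simp
  qed
  have other: "regular_at (tw e i j) y" if i: "i < r" and j: "j < r - 1" for i j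
  proof -
    have "RHS (tw e) i (j + 1) = tw e i j + tw e i (r - 1) * pl (j + 1)" unfolding RHS_def by simp
    moreover have "RHS (tw e) i (j + 1) = LHS e i (j + 1)" using assms(1) i j unfolding EQ_def by simp
    ultimately have "tw e i j = LHS e i (j + 1) - tw e i (r - 1) * pl (j + 1)" by (simp add: algebra_simps)
    thus ?thesis using regLHS[of i "j+1"] last[OF i] i j by (auto intro!: reg_diff reg_mult reg_pl)
  qed
  show ?thesis unfolding regE_def using last other
    by (metis Suc_pred' diff_Suc_1 less_SucE r_pos less_one le_less_trans not_le zero_less_one)
qed

lemma L3a: "regE e x \<Longrightarrow> regE (tw e) (frob_inv q x)"
  unfolding regE_def tw_def using twist_reg1 by blast

lemma L3b: "regE (tw e) (frob_inv q x) \<Longrightarrow> regE e x"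
  unfolding regE_def tw_def using twist_reg2 by blast

lemma bad_finite: "finite {y. \<not> regE e y}"
proof -
  have "{y. \<not> regE e y} = (\<Union>i<r. \<Union>j<r. {y. \<not> regular_at (e i j) y})"
    unfolding regE_def by auto
  thus ?thesis by (auto intro!: finite_UN_I reg_finite)
qed

lemma fwd: "EQ e \<Longrightarrow> \<not> regE e x \<Longrightarrow> x \<noteq> \<theta> \<Longrightarrow> \<not> regE e (x ^ q)"
  using L3a[of e "x ^ q"] L1[of e x] by auto

lemma bwd: "EQ e \<Longrightarrow> \<not> regE e x \<Longrightarrow> frob_inv q x \<noteq> \<theta> \<Longrightarrow> \<not> regE e (frob_inv q x)"
  using L3b[of e x] L2[of e "frob_inv q x"] by auto

lemma iter_ne: "m \<ge> 1 \<Longrightarrow> (frob_inv q ^^ m) \<theta> \<noteq> \<theta>"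
  using frob_inv_iter_pow[of m \<theta>] theta_pow_ne[of m] by auto

lemma iter_inj: "inj (\<lambda>m. (frob_inv q ^^ m) \<theta>)"
proof (rule injI)
  have key: "(frob_inv q ^^ m) \<theta> \<noteq> (frob_inv q ^^ m') \<theta>" if "m < m'" for m m'
  proof
    assume e: "(frob_inv q ^^ m) \<theta> = (frob_inv q ^^ m') \<theta>"
    have mm: "m' = m + (m' - m)" using that by simp
    have "(frob_inv q ^^ m') \<theta> = (frob_inv q ^^ (m + (m' - m))) \<theta>" using mm by metis
    also have "\<dots> = (frob_inv q ^^ m) ((frob_inv q ^^ (m' - m)) \<theta>)" by (simp add: funpow_add)
    finally have "(frob_inv q ^^ m') \<theta> = (frob_inv q ^^ m) ((frob_inv q ^^ (m' - m)) \<theta>)" .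
    hence "(frob_inv q ^^ m) \<theta> = (frob_inv q ^^ m) ((frob_inv q ^^ (m' - m)) \<theta>)" using e by simp
    moreover have "inj (frob_inv q ^^ m :: 'a \<Rightarrow> 'a)"
      by (rule inj_fn) (auto intro: injI frob_inv_inj)
    ultimately have "(frob_inv q ^^ (m' - m)) \<theta> = \<theta>" by (metis injD)
    thus False using iter_ne[of "m' - m"] that by simp
  qed
  fix m m' assume "(frob_inv q ^^ m) \<theta> = (frob_inv q ^^ m') \<theta>"
  thus "m = m'" using key[of m m'] key[of m' m] by (metis linorder_neqE_nat)
qed

lemma pow_inj: "n \<ge> 1 \<Longrightarrow> inj (\<lambda>m. \<theta> ^ (q ^ (n + m)))"
proof (rule injI)
  assume n: "n \<ge> 1"
  have mono: "av (\<theta> ^ (q ^ (n + m))) < av (\<theta> ^ (q ^ (n + m')))" if "m < m'" for m m'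
  proof -
    have "q ^ (n + m) < q ^ (n + m')" using q_gt1 that by (intro power_strict_increasing) auto
    thus ?thesis using av_theta by (simp add: av_pow power_strict_increasing)
  qed
  fix m m' assume "\<theta> ^ (q ^ (n + m)) = \<theta> ^ (q ^ (n + m'))"
  thus "m = m'" using mono[of m m'] mono[of m' m] by (metis linorder_neqE_nat order_less_irrefl)
qed

theorem part_a: assumes "EQ e" shows "regE e (\<theta> ^ (q ^ n))"
proof (rule ccontr)
  assume bad: "\<not> regE e (\<theta> ^ (q ^ n))"
  show False
  proof (cases "n = 0")
    case False
    have "\<not> regE e (\<theta> ^ (q ^ (n + m)))" for m
    proof (induction m)
      case 0 thus ?case using bad by simp
    next
      case (Suc m)
      have "\<theta> ^ (q ^ (n + m)) \<noteq> \<theta>" using theta_pow_ne[of "n + m"] False by simp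
      from fwd[OF assms Suc this] show ?case by (simp add: power_mult[symmetric] mult.commute)
    qed
    hence "infinite {y. \<not> regE e y}" using pow_inj[of n] False
      by (intro inj_infinite_bad[of "\<lambda>m. \<theta> ^ (q ^ (n + m))"]) auto
    thus False using bad_finite by blast
  next
    case True
    have "\<not> regE e ((frob_inv q ^^ m) \<theta>)" for m
    proof (induction m)
      case 0 thus ?case using bad True by simp
    next
      case (Suc m)
      have "(frob_inv q ^^ Suc m) \<theta> \<noteq> \<theta>" by (rule iter_ne) simp
      hence "frob_inv q ((frob_inv q ^^ m) \<theta>) \<noteq> \<theta>" by simp
      from bwd[OF assms Suc this] show ?case by simp
    qed
    hence "infinite {y. \<not> regE e y}" using iter_inj
      by (intro inj_infinite_bad[of "\<lambda>m. (frob_inv q ^^ m) \<theta>"]) auto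
    thus False using bad_finite by blast
  qed
qed

theorem part_b:
  assumes "EQ e" "i \<in> {1..<r}"
  shows "eval_at (e i 0) \<theta> = 0"
proof -
  have "e i 0 = LHS e (i - 1) 0" using assms unfolding LHS_def by simp
  also have "\<dots> = RHS (tw e) (i - 1) 0"
  proof -
    have "i - 1 < r" "0 < r" using assms r_pos by auto
    thus ?thesis using assms(1) unfolding EQ_def by blast
  qed
  also have "\<dots> = tw e (i - 1) (r - 1) * Fract [:- \<theta>, 1:] 1" unfolding RHS_def pl_def TT_def by simp
  finally have e: "e i 0 = tw e (i - 1) (r - 1) * Fract [:- \<theta>, 1:] 1" .
  have "regE e (\<theta> ^ (q ^ 1))" by (rule part_a[OF assms(1)])
  hence "regE (tw e) (frob_inv q (\<theta> ^ q))" using L3a[of e "\<theta> ^ q"] by simp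
  hence R: "\<forall>i<r. \<forall>j<r. regular_at (tw e i j) \<theta>" unfolding regE_def by simp
  have "i - 1 < r" "r - 1 < r" using assms r_pos by auto
  hence "regular_at (tw e (i - 1) (r - 1)) \<theta>" using R by simp
  thus ?thesis unfolding e by (simp add: eval_mult_poly)
qed

end


context cinf
begin

definition tpow :: "(nat \<Rightarrow> 'a) \<Rightarrow> nat \<Rightarrow> nat \<Rightarrow> 'a" where
  "tpow f k = ((tmul f) ^^ k) (tc 1)"

lemma tpow_0 [simp]: "tpow f 0 = tc 1" unfolding tpow_def by simp
lemma tpow_Suc: "tpow f (Suc k) = tmul f (tpow f k)" unfolding tpow_def by simp

lemma tpow_comm: "tmul (tpow f k) f = tmul f (tpow f k)"
proof (induction k)
  case (Suc k)
  have "tmul (tpow f (Suc k)) f = tmul f (tmul (tpow f k) f)" by (simp add: tpow_Suc tmul_assoc)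
  also have "\<dots> = tmul f (tpow f (Suc k))" using Suc by (simp add: tpow_Suc)
  finally show ?case .
qed simp

lemma tmul_0_idx: "tmul f g 0 = f 0 * g 0" by (simp add: tmul_apply)

definition fsupp :: "(nat \<Rightarrow> 'a) \<Rightarrow> nat \<Rightarrow> bool" where
  "fsupp f D \<longleftrightarrow> (\<forall>n>D. f n = 0)"

lemma fsupp_mono: "fsupp f a \<Longrightarrow> a \<le> b \<Longrightarrow> fsupp f b" unfolding fsupp_def by auto

lemma fsupp_tmul: "fsupp f a \<Longrightarrow> fsupp g b \<Longrightarrow> fsupp (tmul f g) (a + b)"
  unfolding fsupp_def tmul_apply
proof (intro allI impI)
  fix n assume f: "\<forall>n>a. f n = 0" and g: "\<forall>n>b. g n = 0" and n: "a + b < n"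
  show "(\<Sum>i\<le>n. f i * g (n - i) ^ q ^ i) = 0"
  proof (intro sum.neutral ballI)
    fix i assume "i \<in> {..n}"
    show "f i * g (n - i) ^ q ^ i = 0"
    proof (cases "i > a")
      case True thus ?thesis using f by simp
    next
      case False hence "n - i > b" using n by auto
      thus ?thesis using g by simp
    qed
  qed
qed

lemma fsupp_sum: "finite A \<Longrightarrow> (\<And>j. j \<in> A \<Longrightarrow> \<exists>D. fsupp (F j) D) \<Longrightarrow> \<exists>D. fsupp (sum F A) D"
proof (induction A rule: finite_induct)
  case empty thus ?case by (auto simp: fsupp_def)
next
  case (insert x A)
  obtain D1 where D1: "fsupp (F x) D1" using insert by blast
  obtain D2 where D2: "fsupp (sum F A) D2" using insert by blast
  have "\<forall>n>max D1 D2. sum F (insert x A) n = 0"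
    using D1 D2 insert(1,2) unfolding fsupp_def by (simp add: sum_fun_apply)
  thus ?case unfolding fsupp_def by blast
qed

lemma fsupp_tc: "fsupp (tc c) 0" unfolding fsupp_def tc_def by simp
lemma fsupp_tt: "fsupp (tt j) j" unfolding fsupp_def tt_def by simp

end

context drin
begin

definition kp :: "nat \<Rightarrow> 'a" where "kp k = (frob_inv q ^^ k) (\<kappa> k)"

lemma kp_pow: "kp k ^ (q ^ k) = \<kappa> k" unfolding kp_def by (rule frob_inv_iter_pow)

definition rhoS :: "nat \<Rightarrow> 'a" where
  "rhoS = (\<lambda>n. if n = 0 then \<theta> else if n \<le> r then rho_coeff r \<kappa> n else 0)"

lemma fsupp_rhoS: "fsupp rhoS r" unfolding fsupp_def rhoS_def by simp

lemma fsupp_tpow: "fsupp (tpow rhoS k) (r * k)"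
proof (induction k)
  case 0 thus ?case using fsupp_tc by simp
next
  case (Suc k)
  from fsupp_tmul[OF fsupp_rhoS Suc] show ?case by (simp add: tpow_Suc)
qed

lemma tpow_rhoS_0: "tpow rhoS k 0 = \<theta> ^ k"
  by (induction k) (simp_all add: tpow_Suc tmul_0_idx tc_def rhoS_def)

lemma rhoS_expand: "rhoS = tc \<theta> + (\<Sum>i\<in>{1..<r}. tmul (tc (\<kappa> i)) (tt i)) + tt r"
proof (rule ext)
  fix n
  have s: "(\<Sum>i\<in>{1..<r}. tmul (tc (\<kappa> i)) (tt i)) n = (\<Sum>i\<in>{1..<r}. if n = i then \<kappa> i else 0)"
    by (simp add: sum_fun_apply tmul_tc_left tt_def if_distrib cong: if_cong)
  show "rhoS n = (tc \<theta> + (\<Sum>i\<in>{1..<r}. tmul (tc (\<kappa> i)) (tt i)) + tt r) n"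
    unfolding plus_fun_apply s using r_pos
    by (auto simp: rhoS_def tc_def tt_def rho_coeff_def sum.delta if_distrib)
qed

lemma tt_r: "tt r = rhoS - tc \<theta> - (\<Sum>i\<in>{1..<r}. tmul (tt i) (tc (kp i)))"
proof -
  have "tmul (tc (\<kappa> i)) (tt i) = tmul (tt i) (tc (kp i))" for i
    by (simp add: tt_tc_comm kp_pow)
  thus ?thesis using rhoS_expand by (simp add: algebra_simps)
qed

definition psi :: "nat \<Rightarrow> 'a poly \<Rightarrow> nat \<Rightarrow> 'a" where
  "psi j p = (\<Sum>k\<le>degree p. tmul (tpow rhoS k) (tmul (tt j) (tc (coeff p k))))"

lemma psi_N: "degree p \<le> N \<Longrightarrow> psi j p = (\<Sum>k\<le>N. tmul (tpow rhoS k) (tmul (tt j) (tc (coeff p k))))"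
  unfolding psi_def
  by (intro sum.mono_neutral_left) (auto simp: coeff_eq_0)

lemma psi_add: "psi j (p + p') = psi j p + psi j p'"
proof -
  define N where "N = max (degree p) (degree p')"
  have "degree (p + p') \<le> N" unfolding N_def by (rule degree_add_le) auto
  hence "psi j (p + p') = (\<Sum>k\<le>N. tmul (tpow rhoS k) (tmul (tt j) (tc (coeff (p + p') k))))"
    by (rule psi_N)
  also have "\<dots> = (\<Sum>k\<le>N. tmul (tpow rhoS k) (tmul (tt j) (tc (coeff p k))))
      + (\<Sum>k\<le>N. tmul (tpow rhoS k) (tmul (tt j) (tc (coeff p' k))))"
    by (simp add: tc_add tmul_add_right sum.distrib)
  also have "\<dots> = psi j p + psi j p'"
    by (subst (1 2) psi_N[where N = N]) (auto simp: N_def)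
  finally show ?thesis .
qed

lemma psi_0 [simp]: "psi j 0 = 0" unfolding psi_def by simp

lemma psi_sum: "psi j (sum F A) = (\<Sum>i\<in>A. psi j (F i))"
  by (induction A rule: infinite_finite_induct) (simp_all add: psi_add)

lemma psi_minus: "psi j (- p) = - psi j p"
  using psi_add[of j p "-p"] by (simp add: eq_neg_iff_add_eq_0 add.commute)

lemma psi_diff: "psi j (p - p') = psi j p - psi j p'"
  using psi_add[of j p "-p'"] psi_minus[of j p'] by simp

lemma psi_smult: "psi j (Polynomial.smult c p) = tmul (psi j p) (tc c)"
proof -
  have "psi j (Polynomial.smult c p) = (\<Sum>k\<le>degree p. tmul (tpow rhoS k) (tmul (tt j) (tc (c * coeff p k))))"
    by (subst psi_N[of _ "degree p"]) (simp_all add: degree_smult_le)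
  also have "\<dots> = (\<Sum>k\<le>degree p. tmul (tmul (tpow rhoS k) (tmul (tt j) (tc (coeff p k)))) (tc c))"
    by (intro sum.cong refl) (simp add: tmul_assoc tmul_tc_tc mult.commute)
  also have "\<dots> = tmul (psi j p) (tc c)" unfolding psi_def by (simp add: tmul_sum_left)
  finally show ?thesis .
qed

lemma psi_const: "psi j ([:c:] * p) = tmul (psi j p) (tc c)"
  using psi_smult by simp

lemma X_mult: "[:0, 1:] * (p :: 'a poly) = pCons 0 p"
proof -
  have "Polynomial.smult 1 p = p" by (rule poly_eqI) simp
  thus ?thesis by (simp add: mult_pCons_left)
qed

lemma psi_X: "psi j ([:0, 1:] * p) = tmul rhoS (psi j p)"
proof -
  have d: "degree (pCons 0 p) \<le> Suc (degree p)" by (rule degree_pCons_le)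
  have "psi j ([:0, 1:] * p) = (\<Sum>k\<le>Suc (degree p). tmul (tpow rhoS k) (tmul (tt j) (tc (coeff (pCons 0 p) k))))"
    unfolding X_mult by (rule psi_N[OF d])
  also have "\<dots> = tmul (tpow rhoS 0) (tmul (tt j) (tc (coeff (pCons 0 p) 0))) +
      (\<Sum>k\<le>degree p. tmul (tpow rhoS (Suc k)) (tmul (tt j) (tc (coeff (pCons 0 p) (Suc k)))))"
    by (rule sum.atMost_Suc_shift)
  also have "\<dots> = (\<Sum>k\<le>degree p. tmul (tpow rhoS (Suc k)) (tmul (tt j) (tc (coeff p k))))"
    by simp
  also have "\<dots> = (\<Sum>k\<le>degree p. tmul rhoS (tmul (tpow rhoS k) (tmul (tt j) (tc (coeff p k)))))"
    by (intro sum.cong refl) (simp only: tpow_Suc tmul_assoc)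
  also have "\<dots> = tmul rhoS (psi j p)"
    unfolding psi_def by (simp only: tmul_sum_right)
  finally show ?thesis .
qed

lemma psi_tau: "tmul (psi j p) (tt 1) = psi (Suc j) (mp p)"
proof -
  have "psi (Suc j) (mp p) = (\<Sum>k\<le>degree p. tmul (tpow rhoS k) (tmul (tt (Suc j)) (tc (coeff (mp p) k))))"
    by (rule psi_N) (rule degree_le, simp add: fi.coeff_mph coeff_eq_0)
  also have "\<dots> = (\<Sum>k\<le>degree p. tmul (tmul (tpow rhoS k) (tmul (tt j) (tc (coeff p k)))) (tt 1))"
  proof (intro sum.cong refl)
    fix k
    have "tmul (tt (Suc j)) (tc (coeff (mp p) k)) = tmul (tmul (tt j) (tt 1)) (tc (frob_inv q (coeff p k)))"
      by (simp only: fi.coeff_mph tmul_tt_tt Suc_eq_plus1)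
    also have "\<dots> = tmul (tt j) (tmul (tt 1) (tc (frob_inv q (coeff p k))))"
      by (rule tmul_assoc)
    also have "tmul (tt 1) (tc (frob_inv q (coeff p k))) = tmul (tc (coeff p k)) (tt 1)"
      using tt_tc_comm[of 1 "frob_inv q (coeff p k)"] by simp
    finally show "tmul (tpow rhoS k) (tmul (tt (Suc j)) (tc (coeff (mp p) k))) =
        tmul (tmul (tpow rhoS k) (tmul (tt j) (tc (coeff p k)))) (tt 1)"
      by (simp only: tmul_assoc)
  qed
  also have "\<dots> = tmul (psi j p) (tt 1)" unfolding psi_def by (simp only: tmul_sum_left)
  finally show ?thesis by simp
qed

lemma psi_r: "psi r p = psi 0 ([:- \<theta>, 1:] * p) + (\<Sum>i\<in>{1..<r}. psi i ([:- kp i:] * p))"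
proof -
  have trm: "tmul (tpow rhoS k) (tmul (tt r) (tc c))
      = tmul (tpow rhoS (Suc k)) (tmul (tt 0) (tc c)) - tmul (tpow rhoS k) (tmul (tt 0) (tc (\<theta> * c)))
        - (\<Sum>i\<in>{1..<r}. tmul (tpow rhoS k) (tmul (tt i) (tc (kp i * c))))" for k c
  proof -
    have "tmul (tt r) (tc c) = tmul rhoS (tc c) - tmul (tc \<theta>) (tc c) - (\<Sum>i\<in>{1..<r}. tmul (tmul (tt i) (tc (kp i))) (tc c))"
      by (subst tt_r) (simp add: tmul_diff_left tmul_sum_left)
    also have "\<dots> = tmul rhoS (tc c) - tc (\<theta> * c) - (\<Sum>i\<in>{1..<r}. tmul (tt i) (tc (kp i * c)))"
      by (simp add: tmul_tc_tc tmul_assoc)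
    finally have e: "tmul (tt r) (tc c) = \<dots>" .
    have "tmul (tpow rhoS k) (tmul rhoS (tc c)) = tmul (tpow rhoS (Suc k)) (tmul (tt 0) (tc c))"
      by (simp add: tpow_Suc tt_0 tmul_assoc[symmetric] tpow_comm)
    thus ?thesis unfolding e by (simp add: tmul_diff_right tmul_sum_right tt_0)
  qed
  define N where "N = degree p"
  have "psi r p = (\<Sum>k\<le>N. tmul (tpow rhoS (Suc k)) (tmul (tt 0) (tc (coeff p k))))
       - (\<Sum>k\<le>N. tmul (tpow rhoS k) (tmul (tt 0) (tc (\<theta> * coeff p k))))
       - (\<Sum>i\<in>{1..<r}. \<Sum>k\<le>N. tmul (tpow rhoS k) (tmul (tt i) (tc (kp i * coeff p k))))"
    unfolding psi_def N_def trm by (simp add: sum_subtractf, rule sum.swap)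
  also have "(\<Sum>k\<le>N. tmul (tpow rhoS (Suc k)) (tmul (tt 0) (tc (coeff p k)))) = psi 0 ([:0, 1:] * p)"
    by (subst psi_X) (simp only: psi_def N_def tmul_sum_right tpow_Suc tmul_assoc)
  also have "(\<Sum>k\<le>N. tmul (tpow rhoS k) (tmul (tt 0) (tc (\<theta> * coeff p k)))) = psi 0 ([:\<theta>:] * p)"
    by (subst psi_N[of _ N]) (auto simp: N_def degree_mult_le)
  also have "(\<Sum>i\<in>{1..<r}. \<Sum>k\<le>N. tmul (tpow rhoS k) (tmul (tt i) (tc (kp i * coeff p k))))
      = (\<Sum>i\<in>{1..<r}. psi i ([:kp i:] * p))"
    by (intro sum.cong refl, subst psi_N[of _ N]) (auto simp: N_def degree_mult_le)
  finally have "psi r p = psi 0 ([:0, 1:] * p) - psi 0 ([:\<theta>:] * p) - (\<Sum>i\<in>{1..<r}. psi i ([:kp i:] * p))" .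
  moreover have "psi 0 ([:- \<theta>, 1:] * p) = psi 0 ([:0, 1:] * p) - psi 0 ([:\<theta>:] * p)"
  proof -
    have "[:- \<theta>, 1:] = [:0, 1:] - [:\<theta>:]" by simp
    hence "[:- \<theta>, 1:] * p = [:0, 1:] * p - [:\<theta>:] * p" by (simp only: left_diff_distrib)
    thus ?thesis by (simp add: psi_diff)
  qed
  moreover have "psi i ([:- kp i:] * p) = - psi i ([:kp i:] * p)" for i
  proof -
    have "[:- kp i:] * p = - ([:kp i:] * p)" by simp
    thus ?thesis by (simp only: psi_minus)
  qed
  ultimately show ?thesis by (simp add: sum_negf)
qed

end


lemma Fract_add1: "Fract (a + b) 1 = Fract a 1 + Fract b (1::'a::idom)"
  by simp

lemma Fract_sum1: "Fract (sum f A) 1 = (\<Sum>i\<in>A. Fract (f i) (1::'a::idom))"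
  by (induction A rule: infinite_finite_induct) (simp_all add: fract_collapse Fract_add1)

lemma Fract1_inj: "Fract a 1 = Fract b (1::'a::idom) \<Longrightarrow> a = b"
  by (simp add: eq_fract)

context drin
begin

definition ppl :: "nat \<Rightarrow> 'a poly" where "ppl j = (if j = 0 then [:- \<theta>, 1:] else [:- kp j:])"

definition PLHS :: "(nat \<Rightarrow> nat \<Rightarrow> 'a poly) \<Rightarrow> nat \<Rightarrow> nat \<Rightarrow> 'a poly" where
  "PLHS f i j = (if i + 1 < r then f (i + 1) j else [:- \<theta>, 1:] * f 0 j + (\<Sum>k\<in>{1..<r}. [:- kp k:] * f k j))"

definition PRHS :: "(nat \<Rightarrow> nat \<Rightarrow> 'a poly) \<Rightarrow> nat \<Rightarrow> nat \<Rightarrow> 'a poly" where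
  "PRHS g i j = (if 1 \<le> j then g i (j - 1) else 0) + g i (r - 1) * ppl j"

definition PEQ :: "(nat \<Rightarrow> nat \<Rightarrow> 'a poly) \<Rightarrow> bool" where
  "PEQ f \<longleftrightarrow> (\<forall>i<r. \<forall>j<r. PLHS f i j = PRHS (\<lambda>i j. mp (f i j)) i j)"

lemma EQ_poly:
  assumes "EQ (\<lambda>i j. Fract (f i j) 1)"
  shows "PEQ f"
  unfolding PEQ_def
proof (intro allI impI)
  fix i j assume i: "i < r" and j: "j < r"
  have L: "LHS (\<lambda>i j. Fract (f i j) 1) i j = Fract (PLHS f i j) 1"
    unfolding LHS_def PLHS_def TT_def cc_def kp_def
    by (cases "i + 1 < r") (simp_all only: Fract_sum1 Fract_add1 mult_fract mult_1 if_True if_False)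
  have R: "RHS (tw (\<lambda>i j. Fract (f i j) 1)) i j = Fract (PRHS (\<lambda>i j. mp (f i j)) i j) 1"
    unfolding RHS_def PRHS_def tw_def pl_def ppl_def TT_def cc_def kp_def
    by (simp add: twist_poly fract_collapse)
  show "PLHS f i j = PRHS (\<lambda>i j. mp (f i j)) i j"
    using assms i j L R unfolding EQ_def by (metis Fract1_inj)
qed

definition Psi :: "(nat \<Rightarrow> 'a poly) \<Rightarrow> nat \<Rightarrow> 'a" where
  "Psi v = (\<Sum>j<r. psi j (v j))"

lemma psi_lin1: "psi j ([:- \<theta>, 1:] * p) = tmul rhoS (psi j p) - tmul (psi j p) (tc \<theta>)"
proof -
  have "[:- \<theta>, 1:] = [:0, 1:] - [:\<theta>:]" by simp
  hence "[:- \<theta>, 1:] * p = [:0, 1:] * p - [:\<theta>:] * p" by (simp only: left_diff_distrib)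
  thus ?thesis by (simp only: psi_diff psi_X psi_const)
qed

lemma psi_lin2: "psi j ([:- c:] * p) = - tmul (psi j p) (tc c)"
proof -
  have "[:- c:] * p = - ([:c:] * p)" by simp
  thus ?thesis by (simp only: psi_minus psi_const)
qed

lemma row_step:
  assumes u: "\<forall>j<r. u j = (if 1 \<le> j then mp (v (j - 1)) else 0) + mp (v (r - 1)) * ppl j"
  shows "Psi u = tmul (Psi v) (tt 1)"
proof -
  define g where "g = mp (v (r - 1))"
  have r1: "{..<r} = insert (r - 1) {..<r - 1}" using r_pos by auto
  have "Psi u = (\<Sum>j<r. psi j (if 1 \<le> j then mp (v (j - 1)) else 0)) + (\<Sum>j<r. psi j (g * ppl j))"
    unfolding Psi_def g_def using u by (simp add: psi_add sum.distrib)
  also have "(\<Sum>j<r. psi j (if 1 \<le> j then mp (v (j - 1)) else 0)) = (\<Sum>j<r - 1. psi (Suc j) (mp (v j)))"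
  proof -
    have "(\<Sum>j<r. psi j (if 1 \<le> j then mp (v (j - 1)) else 0)) = (\<Sum>j<Suc (r - 1). psi j (if 1 \<le> j then mp (v (j - 1)) else 0))"
      using r_pos by simp
    also have "\<dots> = (\<Sum>j<r - 1. psi (Suc j) (mp (v j)))"
      by (subst sum.lessThan_Suc_shift) simp
    finally show ?thesis .
  qed
  also have "(\<Sum>j<r. psi j (g * ppl j)) = psi r g"
  proof -
    have s: "{..<r} = insert 0 {1..<r}" using r_pos by auto
    have "(\<Sum>j<r. psi j (g * ppl j)) = psi 0 ([:- \<theta>, 1:] * g) + (\<Sum>j\<in>{1..<r}. psi j ([:- kp j:] * g))"
      unfolding s by (subst sum.insert) (auto simp: ppl_def mult.commute intro!: sum.cong)
    thus ?thesis using psi_r by simp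
  qed
  finally have PU: "Psi u = (\<Sum>j<r - 1. psi (Suc j) (mp (v j))) + psi r g" .
  have "tmul (Psi v) (tt 1) = (\<Sum>j<r. psi (Suc j) (mp (v j)))"
    unfolding Psi_def tmul_sum_left psi_tau by (rule refl)
  also have "\<dots> = psi r g + (\<Sum>j<r - 1. psi (Suc j) (mp (v j)))"
    unfolding r1 g_def using r_pos by (subst sum.insert) auto
  finally show ?thesis using PU by (simp only: add.commute)
qed

lemma Psi_add: "Psi (\<lambda>j. a j + b j) = Psi a + Psi b"
  unfolding Psi_def by (simp add: psi_add sum.distrib)

theorem P_comm:
  assumes "PEQ f"
  shows "tmul (Psi (f 0)) rhoS = tmul rhoS (Psi (f 0))"
proof -
  define P where "P = Psi (f 0)"
  have rows: "Psi (f i) = tmul P (tt i)" if "i < r" for i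
    using that
  proof (induction i)
    case 0 thus ?case by (simp add: P_def tt_0)
  next
    case (Suc i)
    have "\<forall>j<r. PLHS f i j = PRHS (\<lambda>i j. mp (f i j)) i j"
      using assms Suc.prems unfolding PEQ_def by simp
    hence "\<forall>j<r. f (Suc i) j = (if 1 \<le> j then mp (f i (j - 1)) else 0) + mp (f i (r - 1)) * ppl j"
      using Suc.prems by (auto simp: PLHS_def PRHS_def)
    hence "Psi (f (Suc i)) = tmul (Psi (f i)) (tt 1)" by (rule row_step)
    also have "\<dots> = tmul P (tt (Suc i))" using Suc by (simp add: tmul_assoc tmul_tt_tt)
    finally show ?case .
  qed
  define u where "u j = [:- \<theta>, 1:] * f 0 j + (\<Sum>k\<in>{1..<r}. [:- kp k:] * f k j)" for j
  have "\<forall>j<r. u j = (if 1 \<le> j then mp (f (r - 1) (j - 1)) else 0) + mp (f (r - 1) (r - 1)) * ppl j"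
  proof (intro allI impI)
    fix j assume j: "j < r"
    have "PLHS f (r - 1) j = PRHS (\<lambda>i j. mp (f i j)) (r - 1) j"
      using assms j r_pos unfolding PEQ_def by simp
    thus "u j = (if 1 \<le> j then mp (f (r - 1) (j - 1)) else 0) + mp (f (r - 1) (r - 1)) * ppl j"
      unfolding PLHS_def PRHS_def u_def using r_pos by simp
  qed
  hence "Psi u = tmul (Psi (f (r - 1))) (tt 1)" by (rule row_step)
  also have "\<dots> = tmul P (tt r)" using rows[of "r - 1"] r_pos by (simp add: tmul_assoc tmul_tt_tt)
  finally have U: "Psi u = tmul P (tt r)" .
  have "Psi u = tmul rhoS P - tmul P (tc \<theta>) - (\<Sum>k\<in>{1..<r}. tmul (Psi (f k)) (tc (kp k)))"
  proof -
    have "Psi u = (\<Sum>j<r. psi j ([:- \<theta>, 1:] * f 0 j)) + (\<Sum>j<r. \<Sum>k\<in>{1..<r}. psi j ([:- kp k:] * f k j))"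
      unfolding Psi_def u_def by (simp add: psi_add psi_sum sum.distrib)
    also have "(\<Sum>j<r. psi j ([:- \<theta>, 1:] * f 0 j)) = tmul rhoS P - tmul P (tc \<theta>)"
      unfolding psi_lin1 P_def Psi_def by (simp add: sum_subtractf tmul_sum_right tmul_sum_left)
    also have "(\<Sum>j<r. \<Sum>k\<in>{1..<r}. psi j ([:- kp k:] * f k j)) = - (\<Sum>k\<in>{1..<r}. tmul (Psi (f k)) (tc (kp k)))"
      unfolding psi_lin2 Psi_def by (simp add: sum_negf tmul_sum_left, rule sum.swap)
    finally show ?thesis by (simp only: diff_conv_add_uminus)
  qed
  hence tr: "tmul P (tt r) = tmul rhoS P - tmul P (tc \<theta>) - (\<Sum>k\<in>{1..<r}. tmul P (tmul (tt k) (tc (kp k))))"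
    using U rows by (simp add: tmul_assoc)
  have "tmul P rhoS = tmul P (tc \<theta>) + (\<Sum>i\<in>{1..<r}. tmul P (tmul (tt i) (tc (kp i)))) + tmul P (tt r)"
  proof -
    have "tmul (tc (\<kappa> i)) (tt i) = tmul (tt i) (tc (kp i))" for i
      by (simp add: tt_tc_comm kp_pow)
    thus ?thesis by (subst rhoS_expand) (simp add: tmul_add_right tmul_sum_right)
  qed
  also have "\<dots> = tmul rhoS P" unfolding tr by simp
  finally show ?thesis unfolding P_def .
qed

lemma psi_at0: "psi j p 0 = (if j = 0 then poly p \<theta> else 0)"
proof -
  have "psi j p 0 = (\<Sum>k\<le>degree p. \<theta> ^ k * (if j = 0 then coeff p k else 0))"
    unfolding psi_def sum_fun_apply
    by (intro sum.cong refl) (simp add: tmul_0_idx tpow_rhoS_0 tmul_tt_left tc_def)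
  also have "\<dots> = (if j = 0 then poly p \<theta> else 0)"
    by (simp add: poly_altdef mult.commute)
  finally show ?thesis .
qed

lemma Psi_at0: "Psi v 0 = poly (v 0) \<theta>"
proof -
  have "Psi v 0 = (\<Sum>j<r. if j = 0 then poly (v j) \<theta> else 0)"
    unfolding Psi_def sum_fun_apply psi_at0 by simp
  also have "\<dots> = poly (v 0) \<theta>" using r_pos by (simp add: sum.delta)
  finally show ?thesis .
qed

lemma fsupp_psi: "\<exists>D. fsupp (psi j p) D"
  unfolding psi_def
proof (rule fsupp_sum)
  fix k
  have "fsupp (tmul (tpow rhoS k) (tmul (tt j) (tc (coeff p k)))) (r * k + (j + 0))"
    by (intro fsupp_tmul fsupp_tpow fsupp_tt fsupp_tc)
  thus "\<exists>D. fsupp (tmul (tpow rhoS k) (tmul (tt j) (tc (coeff p k)))) D" by blast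
qed simp

lemma fsupp_Psi: "\<exists>D. fsupp (Psi v) D"
  unfolding Psi_def by (rule fsupp_sum) (auto intro: fsupp_psi)

end


context cinf
begin

lemma regroup:
  "(\<Sum>n<N. (\<Sum>i\<le>n. P i * a (n - i) ^ (q ^ i)) * (l::'a) ^ (q ^ n))
   = (\<Sum>i<N. P i * (\<Sum>m<N - i. a m * l ^ (q ^ m)) ^ (q ^ i))"
proof -
  define g where "g i m = P i * (a m * l ^ (q ^ m)) ^ (q ^ i)" for i m
  have "(\<Sum>i<N. P i * (\<Sum>m<N - i. a m * l ^ (q ^ m)) ^ (q ^ i)) = (\<Sum>i<N. \<Sum>m<N - i. g i m)"
    unfolding g_def by (simp add: frob_sum sum_distrib_left)
  also have "\<dots> = (\<Sum>(i, m)\<in>Sigma {..<N} (\<lambda>i. {..<N - i}). g i m)"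
    by (rule sum.Sigma) auto
  also have "Sigma {..<N} (\<lambda>i. {..<N - i}) = {(i, m). i + m < N}" by auto
  also have "(\<Sum>(i, m)\<in>{(i, m). i + m < N}. g i m) = (\<Sum>n<N. \<Sum>i\<le>n. g i (n - i))"
    by (rule sum.triangle_reindex)
  also have "\<dots> = (\<Sum>n<N. (\<Sum>i\<le>n. P i * a (n - i) ^ (q ^ i)) * l ^ (q ^ n))"
  proof (intro sum.cong refl)
    fix n
    have "g i (n - i) = P i * a (n - i) ^ (q ^ i) * l ^ (q ^ n)" if "i \<le> n" for i
    proof -
      have "(l ^ (q ^ (n - i))) ^ (q ^ i) = l ^ (q ^ n)"
        using that by (simp add: power_mult[symmetric] power_add[symmetric])
      thus ?thesis unfolding g_def by (simp add: power_mult_distrib mult.assoc)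
    qed
    thus "(\<Sum>i\<le>n. g i (n - i)) = (\<Sum>i\<le>n. P i * a (n - i) ^ (q ^ i)) * l ^ (q ^ n)"
      by (simp add: sum_distrib_right)
  qed
  finally show ?thesis by simp
qed

end

context drin
begin

definition es :: "nat \<Rightarrow> 'a" where "es n = ec n"

lemma es_0: "es 0 = 1" unfolding es_def by simp

lemma rhoS_sum: "(\<Sum>i\<le>n. rhoS i * x i) = \<theta> * x 0 + (if n = 0 then 0 else (\<Sum>i\<in>{1..min n r}. rho_coeff r \<kappa> i * x i))"
proof (cases n)
  case 0 thus ?thesis by (simp add: rhoS_def)
next
  case (Suc m)
  have "(\<Sum>i\<le>n. rhoS i * x i) = rhoS 0 * x 0 + (\<Sum>i\<in>{1..n}. rhoS i * x i)"
    by (simp add: atMost_atLeast0 sum.atLeast_Suc_atMost)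
  also have "(\<Sum>i\<in>{1..n}. rhoS i * x i) = (\<Sum>i\<in>{1..min n r}. rhoS i * x i)"
    by (rule sum.mono_neutral_right) (auto simp: rhoS_def)
  also have "\<dots> = (\<Sum>i\<in>{1..min n r}. rho_coeff r \<kappa> i * x i)"
    by (intro sum.cong refl) (auto simp: rhoS_def)
  finally show ?thesis using Suc by (simp add: rhoS_def)
qed

lemma es_rec: "tmul es (tc \<theta>) = tmul rhoS es"
proof (rule ext)
  fix n
  have R: "tmul rhoS es n = \<theta> * es n + (if n = 0 then 0 else (\<Sum>i\<in>{1..min n r}. rho_coeff r \<kappa> i * es (n - i) ^ (q ^ i)))"
    unfolding tmul_apply using rhoS_sum[where n=n and x="\<lambda>i. es (n - i) ^ (q ^ i)"] by simp
  show "tmul es (tc \<theta>) n = tmul rhoS es n"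
  proof (cases n)
    case 0 thus ?thesis using R by (simp add: tmul_tc_right es_0)
  next
    case (Suc m)
    define S where "S = (\<Sum>i\<in>{1..min n r}. rho_coeff r \<kappa> i * es (n - i) ^ (q ^ i))"
    have nz: "\<theta> ^ (q ^ n) - \<theta> \<noteq> 0" using theta_pow_ne[of n] Suc by simp
    have "es n = S / (\<theta> ^ (q ^ n) - \<theta>)" unfolding S_def es_def Suc by simp
    hence "es n * (\<theta> ^ (q ^ n) - \<theta>) = S" using nz by simp
    hence "es n * \<theta> ^ (q ^ n) = \<theta> * es n + S" by (simp add: algebra_simps)
    thus ?thesis using R Suc unfolding S_def by (simp add: tmul_tc_right)
  qed
qed

lemma uniq:
  assumes h: "tmul h (tc \<theta>) = tmul rhoS h" and h0: "h 0 = 0"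
  shows "h n = 0"
proof (induction n rule: less_induct)
  case (less n)
  show ?case
  proof (cases n)
    case 0 thus ?thesis using h0 by simp
  next
    case (Suc m)
    have "h n * \<theta> ^ (q ^ n) = tmul rhoS h n" using fun_cong[OF h, of n] by (simp add: tmul_tc_right)
    also have "\<dots> = \<theta> * h n + (\<Sum>i\<in>{1..min n r}. rho_coeff r \<kappa> i * h (n - i) ^ (q ^ i))"
      unfolding tmul_apply using rhoS_sum[where n=n and x="\<lambda>i. h (n - i) ^ (q ^ i)"] Suc by simp
    also have "(\<Sum>i\<in>{1..min n r}. rho_coeff r \<kappa> i * h (n - i) ^ (q ^ i)) = 0"
      using less Suc by (intro sum.neutral) auto
    finally have "h n * (\<theta> ^ (q ^ n) - \<theta>) = 0" by (simp add: algebra_simps)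
    moreover have "\<theta> ^ (q ^ n) - \<theta> \<noteq> 0" using theta_pow_ne[of n] Suc by simp
    ultimately show ?thesis by simp
  qed
qed

theorem poly_case_End:
  assumes "PEQ f"
  shows "poly (f 0 0) \<theta> \<in> End_rho av q \<theta> r \<kappa>"
proof -
  define P where "P = Psi (f 0)"
  define c0 where "c0 = poly (f 0 0) \<theta>"
  have comm: "tmul P rhoS = tmul rhoS P" unfolding P_def by (rule P_comm[OF assms])
  have P0: "P 0 = c0" unfolding P_def c0_def by (rule Psi_at0)
  obtain D where D: "fsupp P D" unfolding P_def using fsupp_Psi by blast
  define G where "G = tmul P es - tmul es (tc c0)"
  have "tmul G (tc \<theta>) = tmul rhoS G"
  proof -
    have "tmul G (tc \<theta>) = tmul P (tmul es (tc \<theta>)) - tmul es (tmul (tc c0) (tc \<theta>))"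
      unfolding G_def by (simp only: tmul_diff_left tmul_assoc)
    also have "\<dots> = tmul (tmul P rhoS) es - tmul (tmul es (tc \<theta>)) (tc c0)"
    proof -
      have 1: "tmul P (tmul es (tc \<theta>)) = tmul (tmul P rhoS) es"
        by (simp only: es_rec tmul_assoc)
      have "tmul es (tmul (tc c0) (tc \<theta>)) = tmul es (tmul (tc \<theta>) (tc c0))"
        by (simp only: tc_comm[of c0 \<theta>])
      also have "\<dots> = tmul (tmul es (tc \<theta>)) (tc c0)" by (simp only: tmul_assoc)
      finally show ?thesis using 1 by simp
    qed
    also have "\<dots> = tmul rhoS G"
      unfolding G_def comm es_rec by (simp only: tmul_diff_right tmul_assoc)
    finally show ?thesis .
  qed
  moreover have "G 0 = 0" unfolding G_def using P0
    by (simp add: tmul_0_idx es_0 tc_def)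
  ultimately have G: "G n = 0" for n by (rule uniq)
  have Pe: "tmul P es n = es n * c0 ^ (q ^ n)" for n
    using G[of n] unfolding G_def by (simp add: tmul_tc_right)
  have key: "exp_rho av q \<theta> r \<kappa> (c0 * l) = 0" if l: "exp_rho av q \<theta> r \<kappa> l = 0" for l
  proof -
    define S where "S M = (\<Sum>m<M. ec m * l ^ (q ^ m))" for M
    have Sconv: "conv_to av S 0" using exp_conv[of l] l unfolding S_def by simp
    define T where "T N = (\<Sum>n<N. ec n * (c0 * l) ^ (q ^ n))" for N
    have T: "T N = (\<Sum>i<N. P i * S (N - i) ^ (q ^ i))" for N
    proof -
      have "T N = (\<Sum>n<N. (\<Sum>i\<le>n. P i * es (n - i) ^ (q ^ i)) * l ^ (q ^ n))"
        unfolding T_def using Pe by (intro sum.cong refl) (simp add: tmul_apply es_def power_mult_distrib)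
      also have "\<dots> = (\<Sum>i<N. P i * S (N - i) ^ (q ^ i))"
        unfolding regroup S_def es_def by simp
      finally show ?thesis .
    qed
    have "conv_to av T 0"
      unfolding conv_to_def
    proof (intro allI impI)
      fix e :: real assume e: "e > 0"
      define KP where "KP = 1 + (\<Sum>i\<le>D. av (P i))"
      have KP: "KP > 0" unfolding KP_def by (simp add: sum_nonneg add_pos_nonneg)
      define d where "d = min (1/2) (e / (2 * KP))"
      have d: "d > 0" "d \<le> 1/2" "KP * d \<le> e / 2" using e KP unfolding d_def
        by (auto simp: field_simps min_def)
      obtain M0 where M0: "\<forall>M\<ge>M0. av (S M - 0) < d" using Sconv d unfolding conv_to_def by blast
      have "av (T N - 0) < e" if N: "N \<ge> M0 + D + 1" for N
      proof -
        have "av (T N) \<le> e / 2" unfolding T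
        proof (rule av_sum_le)
          fix i assume i: "i \<in> {..<N}"
          show "av (P i * S (N - i) ^ (q ^ i)) \<le> e / 2"
          proof (cases "i \<le> D")
            case False
            hence "P i = 0" using D unfolding fsupp_def by simp
            thus ?thesis using e by simp
          next
            case True
            have s: "av (S (N - i)) < d" using M0 N True by simp
            have s1: "av (S (N - i)) \<le> 1" using s d by simp
            have "av (S (N - i)) ^ (q ^ i) \<le> av (S (N - i)) ^ 1"
              using s1 q_pos by (intro power_decreasing) auto
            hence sp: "av (S (N - i) ^ (q ^ i)) \<le> d" using s by (simp add: av_pow)
            have "av (P i) \<le> (\<Sum>i\<le>D. av (P i))" using True
              by (intro member_le_sum) auto
            hence pi: "av (P i) \<le> KP" unfolding KP_def by simp
            have "av (P i * S (N - i) ^ (q ^ i)) = av (P i) * av (S (N - i) ^ (q ^ i))" by (rule av_mult)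
            also have "\<dots> \<le> KP * d" using pi sp d KP by (intro mult_mono) auto
            also have "\<dots> \<le> e / 2" using d by simp
            finally show ?thesis .
          qed
        qed (use e in simp)
        thus ?thesis using e by simp
      qed
      thus "\<exists>N. \<forall>n\<ge>N. av (T n - 0) < e" by blast
    qed
    moreover have "conv_to av T (exp_rho av q \<theta> r \<kappa> (c0 * l))" unfolding T_def by (rule exp_conv)
    ultimately show "exp_rho av q \<theta> r \<kappa> (c0 * l) = 0" using conv_to_unique by blast
  qed
  show ?thesis unfolding c0_def[symmetric] End_rho_def Lambda_rho_def using key by auto
qed

end


context fhom
begin
lemma mph_prod: "map_poly h (prod f A) = (\<Prod>i\<in>A. map_poly h (f i))"
  by (induction A rule: infinite_finite_induct) (simp_all add: mph_mult)
end

lemma divides_pow: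
  fixes d w :: "'a::field poly"
  assumes ac: "alg_closed TYPE('a)" and d: "d \<noteq> 0" and roots: "\<forall>y. poly d y = 0 \<longrightarrow> poly w y = 0"
  shows "d dvd w ^ degree d"
  using d roots
proof (induction "degree d" arbitrary: d)
  case 0
  hence "is_unit d" by (simp add: is_unit_iff_degree)
  thus ?case by (simp add: unit_imp_dvd)
next
  case (Suc n)
  obtain y where y: "poly d y = 0" using ac Suc(2) unfolding alg_closed_def
    by (metis zero_less_Suc)
  obtain d1 where d1: "d = [:- y, 1:] * d1" using y by (metis dvdE poly_eq_0_iff_dvd)
  have d1nz: "d1 \<noteq> 0" using d1 Suc(3) by auto
  have "degree d = degree [:- y, 1:] + degree d1" unfolding d1 by (rule degree_mult_eq) (use d1nz in auto)
  hence dd: "degree d1 = n" using Suc(2) by simp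
  have "\<forall>z. poly d1 z = 0 \<longrightarrow> poly w z = 0" using Suc(4) d1 by auto
  hence "d1 dvd w ^ degree d1" using Suc(1)[of d1] dd d1nz by simp
  moreover have "[:- y, 1:] dvd w" using Suc(4) y by (simp add: poly_eq_0_iff_dvd[symmetric])
  ultimately have "[:- y, 1:] * d1 dvd w * w ^ n" using dd by (metis mult_dvd_mono)
  moreover have "w ^ degree d = w * w ^ n" using Suc(2) by (metis power_Suc)
  ultimately show ?case using d1 by simp
qed

context drin
begin

lemma EQ_scale:
  assumes "EQ e" "twist_inv q c = c"
  shows "EQ (\<lambda>i j. c * e i j)"
  unfolding EQ_def
proof (intro allI impI)
  fix i j assume i: "i < r" and j: "j < r"
  have "LHS (\<lambda>i j. c * e i j) i j = c * LHS e i j"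
    unfolding LHS_def by (simp add: sum_distrib_left algebra_simps)
  also have "\<dots> = c * RHS (tw e) i j" using assms(1) i j unfolding EQ_def by simp
  also have "\<dots> = RHS (tw (\<lambda>i j. c * e i j)) i j"
    unfolding RHS_def tw_def using assms(2) by (simp add: twist_mult algebra_simps)
  finally show "LHS (\<lambda>i j. c * e i j) i j = RHS (tw (\<lambda>i j. c * e i j)) i j" .
qed

lemma twist_1: "twist_inv q 1 = (1 :: 'a poly fract)"
  using twist_poly[of 1] by (simp add: One_fract_def)
lemma twist_0: "twist_inv q 0 = (0 :: 'a poly fract)"
  using twist_poly[of 0] by (simp add: Zero_fract_def)

lemma EQ_cong:
  assumes "\<forall>i<r. \<forall>j<r. e i j = e' i j"
  shows "EQ e = EQ e'"
proof -
  have L: "LHS e i j = LHS e' i j" if "i < r" "j < r" for i j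
  proof (cases "i + 1 < r")
    case True thus ?thesis unfolding LHS_def using assms that by simp
  next
    case False
    have "(\<Sum>k\<in>{1..<r}. cc k * e k j) = (\<Sum>k\<in>{1..<r}. cc k * e' k j)"
      using assms that by (intro sum.cong refl) simp
    thus ?thesis unfolding LHS_def using assms that r_pos False by simp
  qed
  have R: "RHS (tw e) i j = RHS (tw e') i j" if "i < r" "j < r" for i j
    unfolding RHS_def tw_def using assms that r_pos by simp
  show ?thesis unfolding EQ_def using L R by simp
qed

lemma EQ_id: "EQ (\<lambda>i j. if i = j then 1 else 0)"
proof -
  have "Phi_rho q \<theta> r \<kappa> * 1\<^sub>m r = map_mat (twist_inv q) (1\<^sub>m r) * Phi_rho q \<theta> r \<kappa>"
  proof -
    have "map_mat (twist_inv q) (1\<^sub>m r) = (1\<^sub>m r :: 'a poly fract mat)"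
      by (rule eq_matI) (auto simp: twist_1 twist_0)
    thus ?thesis using Phi_carrier by simp
  qed
  from matrix_EQ[OF _ this] have "EQ (\<lambda>i j. 1\<^sub>m r $$ (i, j))" by simp
  moreover have "EQ (\<lambda>i j. 1\<^sub>m r $$ (i, j)) = EQ (\<lambda>i j. if i = j then 1 else 0)"
    by (rule EQ_cong) simp
  ultimately show ?thesis by simp
qed

lemma bad_closed:
  assumes "EQ e" "\<not> regE e y"
  shows "\<not> regE e (frob_inv q y)"
proof -
  have "y \<noteq> \<theta> ^ (q ^ 1)" using part_a[OF assms(1), of 1] assms(2) by auto
  hence "frob_inv q y \<noteq> \<theta>" by (metis frob_inv_eq_iff power_one_right)
  thus ?thesis using bwd[OF assms] by simp
qed

lemma bad_periodic:
  assumes "EQ e" "\<not> regE e y"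
  shows "\<exists>d\<ge>1. y ^ (q ^ d) = y"
proof -
  have inS: "\<not> regE e ((frob_inv q ^^ m) y)" for m
    by (induction m) (simp_all add: assms bad_closed)
  have "\<not> inj (\<lambda>m. (frob_inv q ^^ m) y)"
    using inj_infinite_bad[of "\<lambda>m. (frob_inv q ^^ m) y" "{y. \<not> regE e y}"] inS bad_finite by auto
  then obtain m m' where mm: "m \<noteq> m'" "(frob_inv q ^^ m) y = (frob_inv q ^^ m') y"
    unfolding inj_def by blast
  have key: "\<exists>d\<ge>1. y ^ (q ^ d) = y" if "m < m'" "(frob_inv q ^^ m) y = (frob_inv q ^^ m') y" for m m'
  proof -
    have mm: "m' = m + (m' - m)" using that by simp
    have "(frob_inv q ^^ m') y = (frob_inv q ^^ (m + (m' - m))) y" using mm by metis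
    also have "\<dots> = (frob_inv q ^^ m) ((frob_inv q ^^ (m' - m)) y)" by (simp add: funpow_add)
    finally have "(frob_inv q ^^ m) y = (frob_inv q ^^ m) ((frob_inv q ^^ (m' - m)) y)" using that by simp
    moreover have "inj (frob_inv q ^^ m :: 'a \<Rightarrow> 'a)"
      by (rule inj_fn) (auto intro: injI frob_inv_inj)
    ultimately have e: "(frob_inv q ^^ (m' - m)) y = y" by (metis injD)
    have "y ^ (q ^ (m' - m)) = y" using frob_inv_iter_pow[of "m' - m" y] e by simp
    thus ?thesis using that by (intro exI[of _ "m' - m"]) auto
  qed
  show ?thesis using mm key[of m m'] key[of m' m] by (metis linorder_neqE_nat)
qed

theorem part_c:
  assumes EQe: "EQ e"
  shows "eval_at (e 0 0) \<theta> \<in> K_rho av q \<theta> r \<kappa>"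
proof -
  have ac: "alg_closed TYPE('a)" using C unfolding is_C_infty_def by blast
  define S where "S = {y. \<not> regE e y}"
  have finS: "finite S" unfolding S_def by (rule bad_finite)
  define dd where "dd y = (SOME d. d \<ge> 1 \<and> y ^ (q ^ d) = y)" for y :: 'a
  have dd: "dd y \<ge> 1 \<and> y ^ (q ^ dd y) = y" if "y \<in> S" for y
  proof -
    have "\<exists>d. d \<ge> 1 \<and> y ^ (q ^ d) = y" using bad_periodic[OF EQe] that unfolding S_def by auto
    thus ?thesis unfolding dd_def by (rule someI_ex)
  qed
  define w where "w = (\<Prod>y\<in>S. monom (1::'a) (q ^ dd y) - [:0, 1:])"
  have mpw: "mp w = w" unfolding w_def by (simp add: fi.mph_prod fi.mph_diff)
  have wth: "poly w \<theta> \<noteq> 0"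
  proof -
    have "poly w \<theta> = (\<Prod>y\<in>S. \<theta> ^ (q ^ dd y) - \<theta>)" unfolding w_def
      by (simp add: poly_prod poly_monom)
    moreover have "\<theta> ^ (q ^ dd y) - \<theta> \<noteq> 0" if "y \<in> S" for y
      using theta_pow_ne[of "dd y"] dd[OF that] by simp
    ultimately show ?thesis using finS by simp
  qed
  have wS: "poly w y = 0" if "y \<in> S" for y
  proof -
    have "poly (monom (1::'a) (q ^ dd y) - [:0, 1:]) y = 0" using dd[OF that] by (simp add: poly_monom)
    thus ?thesis unfolding w_def using finS that by (simp add: poly_prod prod_zero_iff) blast
  qed
  have red: "\<exists>n d. d \<noteq> 0 \<and> e i j = Fract n d \<and> d dvd w ^ degree d" if "i < r" "j < r" for i j
  proof -
    obtain n d where nd: "d \<noteq> 0" "e i j = Fract n d" "\<forall>y. poly d y = 0 \<longrightarrow> \<not> regular_at (e i j) y"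
      using fract_reduced[of "e i j"] by blast
    have "\<forall>y. poly d y = 0 \<longrightarrow> poly w y = 0"
      using nd(3) that wS unfolding S_def regE_def by blast
    hence "d dvd w ^ degree d" by (rule divides_pow[OF ac nd(1)])
    thus ?thesis using nd by blast
  qed
  define nn where "nn i j = (SOME n. \<exists>d. d \<noteq> 0 \<and> e i j = Fract n d \<and> d dvd w ^ degree d)" for i j
  define den where "den i j = (SOME d. d \<noteq> 0 \<and> e i j = Fract (nn i j) d \<and> d dvd w ^ degree d)" for i j
  have ND: "den i j \<noteq> 0 \<and> e i j = Fract (nn i j) (den i j) \<and> den i j dvd w ^ degree (den i j)"
    if "i < r" "j < r" for i j
  proof -
    have "\<exists>d. d \<noteq> 0 \<and> e i j = Fract (nn i j) d \<and> d dvd w ^ degree d"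
      unfolding nn_def using red[OF that] by (rule someI_ex)
    thus ?thesis unfolding den_def by (rule someI_ex)
  qed
  define M where "M = (\<Sum>i<r. \<Sum>j<r. degree (den i j))"
  have degM: "degree (den i j) \<le> M" if "i < r" "j < r" for i j
  proof -
    have "degree (den i j) \<le> (\<Sum>j<r. degree (den i j))" using that by (intro member_le_sum) auto
    also have "\<dots> \<le> M" unfolding M_def using that by (intro member_le_sum) auto
    finally show ?thesis .
  qed
  define b where "b = w ^ M"
  define c where "c = Fract b 1"
  have twc: "twist_inv q c = c" unfolding c_def b_def by (simp add: twist_poly fi.mph_pow mpw)
  define F where "F i j = (if i < r \<and> j < r then nn i j * (b div den i j) else 0)" for i j
  have cF: "c * e i j = Fract (F i j) 1" if "i < r" "j < r" for i j
  proof -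
    have dv: "den i j dvd b" unfolding b_def
      using ND[OF that] degM[OF that] by (meson dvd_trans le_imp_power_dvd)
    then obtain k where k: "b = den i j * k" by (elim dvdE)
    have "c * e i j = Fract (b * nn i j) (den i j)" unfolding c_def using ND[OF that] by simp
    also have "\<dots> = Fract (nn i j * k) 1" using ND[OF that] k by (simp add: eq_fract algebra_simps)
    also have "b div den i j = k" using k ND[OF that] by simp
    hence "nn i j * k = F i j" unfolding F_def using that by simp
    finally show ?thesis .
  qed
  have EQF: "EQ (\<lambda>i j. Fract (F i j) 1)"
  proof -
    have "EQ (\<lambda>i j. c * e i j)" by (rule EQ_scale[OF EQe twc])
    moreover have "EQ (\<lambda>i j. c * e i j) = EQ (\<lambda>i j. Fract (F i j) 1)"
      by (rule EQ_cong) (use cF in simp)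
    ultimately show ?thesis by simp
  qed
  have End1: "poly (F 0 0) \<theta> \<in> End_rho av q \<theta> r \<kappa>"
    by (rule poly_case_End[OF EQ_poly[OF EQF]])
  define Fb where "Fb i j = (if i = j then b else 0)" for i j :: nat
  have "EQ (\<lambda>i j. Fract (Fb i j) 1)"
  proof -
    have "EQ (\<lambda>i j. c * (if i = j then 1 else 0))" by (rule EQ_scale[OF EQ_id twc])
    moreover have "(\<lambda>i j. c * (if i = j then 1 else 0)) = (\<lambda>i j. Fract (Fb i j) 1)"
      unfolding Fb_def c_def by (auto simp: fun_eq_iff fract_collapse)
    ultimately show ?thesis by simp
  qed
  hence "poly (Fb 0 0) \<theta> \<in> End_rho av q \<theta> r \<kappa>" by (rule poly_case_End[OF EQ_poly])
  hence End2: "poly b \<theta> \<in> End_rho av q \<theta> r \<kappa>" unfolding Fb_def by simp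
  have bnz: "poly b \<theta> \<noteq> 0" unfolding b_def using wth by simp
  have reg0: "regular_at (e 0 0) \<theta>" using part_a[OF EQe, of 0] r_pos unfolding regE_def by simp
  have "eval_at (e 0 0 * Fract b 1) \<theta> = eval_at (e 0 0) \<theta> * poly b \<theta>"
    by (rule eval_mult_poly[OF reg0])
  moreover have "e 0 0 * Fract b 1 = Fract (F 0 0) 1" using cF[of 0 0] r_pos unfolding c_def
    by (simp add: mult.commute)
  moreover have "eval_at (Fract (F 0 0) 1) \<theta> = poly (F 0 0) \<theta>" by (simp add: eval_at_Fract)
  ultimately have "eval_at (e 0 0) \<theta> = poly (F 0 0) \<theta> / poly b \<theta>" using bnz
    by (simp add: field_simps)
  thus ?thesis unfolding K_rho_def using End1 End2 bnz by blast
qed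

end

theorem proposition4p1:
  fixes av :: "'a::field \<Rightarrow> real" and q :: nat and \<theta> :: 'a
    and r :: nat and \<kappa> :: "nat \<Rightarrow> 'a" and E :: "'a poly fract mat"
  assumes C: "is_C_infty av q \<theta>"
    and r: "r \<ge> 1"
    and kappa: "\<forall>i\<in>{1..<r}. \<kappa> i \<in> kbar q \<theta>"
    and E_dim: "E \<in> carrier_mat r r"
    and E_ent: "\<forall>i<r. \<forall>j<r. E $$ (i, j) \<in> kbar_t q \<theta>"
    and E_end: "Phi_rho q \<theta> r \<kappa> * E = map_mat (twist_inv q) E * Phi_rho q \<theta> r \<kappa>"
  shows "(\<forall>i<r. \<forall>j<r. \<forall>n. regular_at (E $$ (i, j)) (\<theta> ^ (q ^ n)))
       \<and> (\<forall>i\<in>{1..<r}. eval_at (E $$ (i, 0)) \<theta> = 0)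
       \<and> eval_at (E $$ (0, 0)) \<theta> \<in> K_rho av q \<theta> r \<kappa>"
proof -
  interpret D: drin av q \<theta> r \<kappa>
    using C r by (simp add: drin_def drin_axioms_def cinf_def)
  have EQ: "D.EQ (\<lambda>i j. E $$ (i, j))" by (rule D.matrix_EQ[OF E_dim E_end])
  have a: "\<forall>i<r. \<forall>j<r. \<forall>n. regular_at (E $$ (i, j)) (\<theta> ^ (q ^ n))"
    using D.part_a[OF EQ] unfolding D.regE_def by blast
  have b: "\<forall>i\<in>{1..<r}. eval_at (E $$ (i, 0)) \<theta> = 0"
    using D.part_b[OF EQ] by blast
  have c: "eval_at (E $$ (0, 0)) \<theta> \<in> K_rho av q \<theta> r \<kappa>"
    using D.part_c[OF EQ] by simp
  show ?thesis using a b c by blast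
qed


end
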